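(* Let $\alpha>1$, $\delta\in(0,\alpha-1)$, $\tau\in(0,\alpha-1-\delta]$, $d\in\mathbb N$, $1\ge\gamma_1\ge\dots\ge\gamma_d>0$, and $g\in H_{\alpha,\boldsymbol\gamma,d}$. Let $\boldsymbol x_1,\dots,\boldsymbol x_N\in[0,1]^d$, $c_1,\dots,c_N\in\mathbb R$. Let $L$ be a prime and $\mathcal Z=\{\boldsymbol z_0,\dots,\boldsymbol z_{L-1}\}$ a rank-1 lattice point set of size $L$ satisfying $e(H_{\beta,\boldsymbol\gamma,d},\mathcal Z)\le C_{\boldsymbol\gamma,d}(\beta,\tau')L^{-\beta+\tau'}$ for all $\tau'\in(0,\beta-\frac12]$, where $\beta=\alpha-\frac12-\delta$. Then for $\nu>1$, with $K=R^\alpha_{\nu,\boldsymbol\gamma,d}$, $$\mathrm{err}_1(g,\mathcal C)+\mathrm{err}_2(g,\mathcal C)\lesssim\|g\|_{H_{\alpha,\boldsymbol\gamma,d}}\Big(\frac1{\nu^{\frac12-\frac1{4\alpha}}}+\frac{\nu^{(\frac12+\frac1{4\alpha})d}}{L^{\alpha-\frac12-\delta-\tau}}c_{\alpha,\boldsymbol\gamma,d}\,\zeta_{\delta,d}\,C_{\boldsymbol\gamma,d}\big(\alpha-\tfrac12-\delta,\tau\big)\Big)\overline\mu_N,$$ where the implicit constant depends on $d$, $\alpha$ and $(\gamma_j)_{j\in[d]}$.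
   Context: $r_\beta(\gamma,h)=\max(|h|^{2\beta}/\gamma,1)$, $r_\beta(\boldsymbol\gamma,\boldsymbol k)=\prod_jr_\beta(\gamma_j,k_j)$; $\omega_{\boldsymbol k}(\boldsymbol x)=\exp(2\pi i\,\boldsymbol k\cdot\boldsymbol x)$, $\widehat f_{\boldsymbol k}=\int_{[0,1]^d}f\,\overline{\omega_{\boldsymbol k}}$. Weighted Korobov space ($\beta>1/2$): $H_{\beta,\boldsymbol\gamma,d}=\{f\in L_2([0,1]^d):\|f\|_{H_{\beta,\boldsymbol\gamma,d}}=(\sum_{\boldsymbol k}r_\beta(\boldsymbol\gamma,\boldsymbol k)|\widehat f_{\boldsymbol k}|^2)^{1/2}<\infty\}$. $R^\alpha_{\nu,\boldsymbol\gamma,d}=\{\boldsymbol k\in\mathbb Z^d:\max_jr_\alpha(\gamma_j,k_j)\le\nu\}$. $\phi_K(\boldsymbol x)=\sum_{\boldsymbol k\in K}\check\phi_{\boldsymbol k}\overline{\omega_{\boldsymbol k}(\boldsymbol x)}$, $\check\phi_{\boldsymbol k}=\frac1N\sum_nc_n\omega_{\boldsymbol k}(\boldsymbol x_n)$; $\mathcal C=(c_n)$; $\mathrm{err}_1(g,\mathcal C)=|\frac1N\sum_nc_ng(\boldsymbol x_n)-\int g\phi_K|$, $\mathrm{err}_2(g,\mathcal C)=|\int g\phi_K-\frac1L\sum_\ell(g\phi_K)(\boldsymbol z_\ell)|$. Rank-1 lattice: $\{\boldsymbol z_\ell=(\ell\mathfrak g/L)\bmod1\}$, $\mathfrak g\in\{1,\dots,L-1\}^d$.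 $e(H_{\beta,\boldsymbol\gamma,d},\mathcal Z)=\sup_{\|f\|\le1}|\int f-\frac1L\sum_\ell f(\boldsymbol z_\ell)|$. $C_{\boldsymbol\gamma,d}(\beta,\tau)=2^{\beta-\tau}\prod_j[1+2\gamma_j^{1/(2(\beta-\tau))}\zeta(\frac\beta{\beta-\tau})]^{\beta-\tau}$; $\overline\mu_N=\frac1N\sum_n|c_n|$; $c_{\alpha,\boldsymbol\gamma,d}=\sqrt{\prod_j\max(1,2^{2\alpha}\gamma_j)}$; $\zeta_{\delta,d}=[1+2\zeta(1+2\delta)]^{d/2}$; $\zeta$ Riemann zeta. *)

theory Defs
  imports "HOL-Analysis.Analysis" "HOL-Probability.Probability"
begin

text \<open>Dimension d: points of [0,1]^d are extensional functions nat => real on {..<d};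
  frequencies k in Z^d are functions nat => int vanishing outside {..<d}.\<close>

definition cube :: "nat \<Rightarrow> (nat \<Rightarrow> real) set" where
  "cube d = PiE {..<d} (\<lambda>_. {0..1})"

definition cube_measure :: "nat \<Rightarrow> (nat \<Rightarrow> real) measure" where
  "cube_measure d = PiM {..<d} (\<lambda>_. restrict_space lborel {0..1})"

definition Zd :: "nat \<Rightarrow> (nat \<Rightarrow> int) set" where
  "Zd d = {k. \<forall>j\<ge>d. k j = 0}"

definition rzeta :: "real \<Rightarrow> real" where
  "rzeta s = (\<Sum>n. 1 / real (Suc n) powr s)"

definition r1 :: "real \<Rightarrow> real \<Rightarrow> int \<Rightarrow> real" where
  "r1 \<beta> \<gamma> h = max (\<bar>real_of_int h\<bar> powr (2 * \<beta>) / \<gamma>) 1"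

definition rw :: "real \<Rightarrow> (nat \<Rightarrow> real) \<Rightarrow> nat \<Rightarrow> (nat \<Rightarrow> int) \<Rightarrow> real" where
  "rw \<beta> \<gamma> d k = (\<Prod>j<d. r1 \<beta> (\<gamma> j) (k j))"

definition omega :: "nat \<Rightarrow> (nat \<Rightarrow> int) \<Rightarrow> (nat \<Rightarrow> real) \<Rightarrow> complex" where
  "omega d k x = cis (2 * pi * (\<Sum>j<d. real_of_int (k j) * x j))"

definition fourier :: "nat \<Rightarrow> ((nat \<Rightarrow> real) \<Rightarrow> complex) \<Rightarrow> (nat \<Rightarrow> int) \<Rightarrow> complex" where
  "fourier d f k = integral\<^sup>L (cube_measure d) (\<lambda>x. f x * cnj (omega d k x))"

definition korobov_norm :: "real \<Rightarrow> (nat \<Rightarrow> real) \<Rightarrow> nat \<Rightarrow> ((nat \<Rightarrow> real) \<Rightarrow> complex) \<Rightarrow> real" where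
  "korobov_norm \<beta> \<gamma> d f = sqrt (\<Sum>\<^sub>\<infinity>k\<in>Zd d. rw \<beta> \<gamma> d k * (cmod (fourier d f k))\<^sup>2)"

text \<open>Weighted Korobov space; functions are identified with the (pointwise) sum of their
  Fourier series on the cube (the continuous representative).\<close>
definition korobov :: "real \<Rightarrow> (nat \<Rightarrow> real) \<Rightarrow> nat \<Rightarrow> ((nat \<Rightarrow> real) \<Rightarrow> complex) set" where
  "korobov \<beta> \<gamma> d = {f.
     f \<in> borel_measurable (cube_measure d) \<and>
     integrable (cube_measure d) (\<lambda>x. (cmod (f x))\<^sup>2) \<and>
     (\<lambda>k. rw \<beta> \<gamma> d k * (cmod (fourier d f k))\<^sup>2) summable_on Zd d \<and>
     (\<forall>x\<in>cube d. ((\<lambda>k. fourier d f k * omega d k x) has_sum f x) (Zd d))}"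

definition Rset :: "real \<Rightarrow> real \<Rightarrow> (nat \<Rightarrow> real) \<Rightarrow> nat \<Rightarrow> (nat \<Rightarrow> int) set" where
  "Rset \<alpha> \<nu> \<gamma> d = {k \<in> Zd d. \<forall>j<d. r1 \<alpha> (\<gamma> j) (k j) \<le> \<nu>}"

definition phi_check :: "nat \<Rightarrow> nat \<Rightarrow> (nat \<Rightarrow> nat \<Rightarrow> real) \<Rightarrow> (nat \<Rightarrow> real) \<Rightarrow> (nat \<Rightarrow> int) \<Rightarrow> complex" where
  "phi_check d N xs c k = (1 / of_nat N) * (\<Sum>n<N. complex_of_real (c n) * omega d k (xs n))"

definition phi_K :: "nat \<Rightarrow> (nat \<Rightarrow> int) set \<Rightarrow> nat \<Rightarrow> (nat \<Rightarrow> nat \<Rightarrow> real) \<Rightarrow> (nat \<Rightarrow> real)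
    \<Rightarrow> (nat \<Rightarrow> real) \<Rightarrow> complex" where
  "phi_K d K N xs c x = (\<Sum>k\<in>K. phi_check d N xs c k * cnj (omega d k x))"

definition lattice_pt :: "nat \<Rightarrow> nat \<Rightarrow> (nat \<Rightarrow> nat) \<Rightarrow> nat \<Rightarrow> (nat \<Rightarrow> real)" where
  "lattice_pt d L gen l = restrict (\<lambda>j. frac (real l * real (gen j) / real L)) {..<d}"

definition lattice_rule :: "nat \<Rightarrow> nat \<Rightarrow> (nat \<Rightarrow> nat) \<Rightarrow> ((nat \<Rightarrow> real) \<Rightarrow> complex) \<Rightarrow> complex" where
  "lattice_rule d L gen f = (1 / of_nat L) * (\<Sum>l<L. f (lattice_pt d L gen l))"

definition err1 :: "nat \<Rightarrow> (nat \<Rightarrow> int) set \<Rightarrow> ((nat \<Rightarrow> real) \<Rightarrow> complex) \<Rightarrow> nat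
    \<Rightarrow> (nat \<Rightarrow> nat \<Rightarrow> real) \<Rightarrow> (nat \<Rightarrow> real) \<Rightarrow> real" where
  "err1 d K g N xs c = cmod ((1 / of_nat N) * (\<Sum>n<N. complex_of_real (c n) * g (xs n))
      - integral\<^sup>L (cube_measure d) (\<lambda>x. g x * phi_K d K N xs c x))"

definition err2 :: "nat \<Rightarrow> (nat \<Rightarrow> int) set \<Rightarrow> ((nat \<Rightarrow> real) \<Rightarrow> complex) \<Rightarrow> nat
    \<Rightarrow> (nat \<Rightarrow> nat \<Rightarrow> real) \<Rightarrow> (nat \<Rightarrow> real) \<Rightarrow> nat \<Rightarrow> (nat \<Rightarrow> nat) \<Rightarrow> real" where
  "err2 d K g N xs c L gen = cmod (integral\<^sup>L (cube_measure d) (\<lambda>x. g x * phi_K d K N xs c x)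
      - lattice_rule d L gen (\<lambda>x. g x * phi_K d K N xs c x))"

definition wce :: "real \<Rightarrow> (nat \<Rightarrow> real) \<Rightarrow> nat \<Rightarrow> nat \<Rightarrow> (nat \<Rightarrow> nat) \<Rightarrow> real" where
  "wce \<beta> \<gamma> d L gen = Sup {cmod (integral\<^sup>L (cube_measure d) f - lattice_rule d L gen f) | f.
      f \<in> korobov \<beta> \<gamma> d \<and> korobov_norm \<beta> \<gamma> d f \<le> 1}"

definition Cgd :: "(nat \<Rightarrow> real) \<Rightarrow> nat \<Rightarrow> real \<Rightarrow> real \<Rightarrow> real" where
  "Cgd \<gamma> d \<beta> \<tau> = 2 powr (\<beta> - \<tau>) *
     (\<Prod>j<d. (1 + 2 * \<gamma> j powr (1 / (2 * (\<beta> - \<tau>))) * rzeta (\<beta> / (\<beta> - \<tau>))) powr (\<beta> - \<tau>))"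

definition mu_bar :: "nat \<Rightarrow> (nat \<Rightarrow> real) \<Rightarrow> real" where
  "mu_bar N c = (1 / real N) * (\<Sum>n<N. \<bar>c n\<bar>)"

definition c_agd :: "real \<Rightarrow> (nat \<Rightarrow> real) \<Rightarrow> nat \<Rightarrow> real" where
  "c_agd \<alpha> \<gamma> d = sqrt (\<Prod>j<d. max 1 (2 powr (2 * \<alpha>) * \<gamma> j))"

definition zeta_dd :: "real \<Rightarrow> nat \<Rightarrow> real" where
  "zeta_dd \<delta> d = (1 + 2 * rzeta (1 + 2 * \<delta>)) powr (real d / 2)"

end

theory Submission
  imports Defs
begin

lemma prob_cube: "prob_space (cube_measure d)"
  unfolding cube_measure_def
  by (intro prob_space_PiM prob_space_restrict_space) auto

lemma space_cube: "space (cube_measure d) = cube d"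
  unfolding cube_measure_def cube_def space_PiM by (simp add: space_restrict_space)

lemma omega_meas: "(\<lambda>x. omega d k x) \<in> borel_measurable (cube_measure d)"
proof -
  have "(\<lambda>x. x j) \<in> borel_measurable (cube_measure d)" if "j < d" for j
  proof -
    have "(\<lambda>x. x j) \<in> measurable (cube_measure d) (restrict_space lborel {0..1::real})"
      unfolding cube_measure_def using that by (intro measurable_component_singleton) auto
    moreover have "(\<lambda>x. x) \<in> measurable (restrict_space lborel {0..1::real}) borel"
      by (intro measurable_restrict_space1) simp
    ultimately show ?thesis using measurable_comp by (simp add: comp_def)
  qed
  then have "(\<lambda>x. 2 * pi * (\<Sum>j<d. real_of_int (k j) * x j)) \<in> borel_measurable (cube_measure d)"
    by (intro borel_measurable_times borel_measurable_sum borel_measurable_const) auto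
  then show ?thesis unfolding omega_def
    by (rule borel_measurable_continuous_on[OF continuous_on_cis[OF continuous_on_id]])
qed

lemma norm_omega[simp]: "cmod (omega d k x) = 1"
  unfolding omega_def by simp

lemma omega_zero: "omega d (\<lambda>_. 0) x = 1"
  unfolding omega_def by simp

lemma omega_mult_cnj: "omega d j x * cnj (omega d k x) = omega d (\<lambda>i. j i - k i) x"
proof -
  have "cis a * cnj (cis b) = cis (a - b)" for a b by (simp add: cis_cnj cis_mult)
  moreover have "2 * pi * (\<Sum>i<d. real_of_int (j i) * x i) - 2 * pi * (\<Sum>i<d. real_of_int (k i) * x i)
     = 2 * pi * (\<Sum>i<d. real_of_int (j i - k i) * x i)"
    by (simp add: sum_subtractf[symmetric] right_diff_distrib[symmetric] left_diff_distrib)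
  ultimately show ?thesis unfolding omega_def by simp
qed

lemma cnj_omega_mult: "cnj (omega d k x) * cnj (omega d m x) = cnj (omega d (\<lambda>i. m i + k i) x)"
proof -
  have "cnj (cis a) * cnj (cis b) = cnj (cis (a + b))" for a b by (simp add: cis_cnj cis_mult)
  moreover have "2 * pi * (\<Sum>i<d. real_of_int (k i) * x i) + 2 * pi * (\<Sum>i<d. real_of_int (m i) * x i)
     = 2 * pi * (\<Sum>i<d. real_of_int (m i + k i) * x i)"
    by (simp add: sum.distrib algebra_simps)
  ultimately show ?thesis unfolding omega_def by simp
qed

lemma cnj_omega: "cnj (omega d k x) = omega d (\<lambda>i. - k i) x"
  unfolding omega_def by (simp add: cis_cnj sum_negf)

lemma kor_int:
  assumes "g \<in> korobov s \<gamma> d"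
  shows "integrable (cube_measure d) g"
proof -
  interpret prob_space "cube_measure d" by (rule prob_cube)
  have m: "g \<in> borel_measurable (cube_measure d)" and i2: "integrable (cube_measure d) (\<lambda>x. (cmod (g x))\<^sup>2)"
    using assms unfolding korobov_def by auto
  have "integrable (cube_measure d) (\<lambda>x. 1 + (cmod (g x))\<^sup>2)" using i2 by simp
  then show ?thesis
  proof (rule Bochner_Integration.integrable_bound)
    show "AE x in cube_measure d. norm (g x) \<le> norm (1 + (cmod (g x))\<^sup>2)"
    proof (rule AE_I2)
      fix x
      have "0 \<le> (cmod (g x) - 1)\<^sup>2" by simp
      then have "2 * cmod (g x) \<le> (cmod (g x))\<^sup>2 + 1" 
        unfolding power2_diff by simp
      then have "cmod (g x) \<le> 1 + (cmod (g x))\<^sup>2" using norm_ge_zero[of "g x"] by linarith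
      then show "norm (g x) \<le> norm (1 + (cmod (g x))\<^sup>2)" by simp
    qed
  qed (rule m)
qed

lemma kor_int_omega:
  assumes "g \<in> korobov s \<gamma> d"
  shows "integrable (cube_measure d) (\<lambda>x. g x * cnj (omega d k x))"
proof -
  have "(\<lambda>x. cnj (omega d k x)) \<in> borel_measurable (cube_measure d)"
    unfolding cnj_omega by (rule omega_meas)
  then show ?thesis
    using kor_int[OF assms]
    by (intro Bochner_Integration.integrable_bound[OF kor_int[OF assms]]) (auto simp: norm_mult)
qed

lemma step_ineq:
  fixes p x :: real
  assumes p: "p > 1" and x: "x \<ge> 2"
  shows "x powr (-p) \<le> ((x-1) powr (1-p) - x powr (1-p)) / (p-1)"
proof -
  have "\<And>y. x-1 \<le> y \<Longrightarrow> y \<le> x \<Longrightarrow> ((\<lambda>y. y powr (1-p)) has_real_derivative (1-p) * y powr (1-p-1)) (at y)"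
  proof -
    fix y assume "x-1 \<le> y" "y \<le> x"
    then have "y > 0" using x by linarith
    then show "((\<lambda>y. y powr (1-p)) has_real_derivative (1-p) * y powr (1-p-1)) (at y)"
      by (rule has_real_derivative_powr)
  qed
  from MVT2[of "x-1" x "\<lambda>y. y powr (1-p)" "\<lambda>y. (1-p) * y powr (1-p-1)", OF _ this] obtain z where z: "x-1 < z" "z < x"
    and eq: "x powr (1-p) - (x-1) powr (1-p) = (x - (x-1)) * ((1-p) * z powr (1-p-1))"
    by auto
  have "x powr (-p) \<le> z powr (-p)"
    using z x p by (intro powr_mono2') auto
  moreover have "(x-1) powr (1-p) - x powr (1-p) = (p-1) * z powr (-p)"
    using eq by (simp add: algebra_simps)
  ultimately have "x powr (-p) * (p-1) \<le> (x-1) powr (1-p) - x powr (1-p)"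
    using p by (simp add: mult.commute mult_left_mono)
  then show ?thesis using p by (simp add: pos_le_divide_eq)
qed

lemma tele:
  fixes p :: real
  assumes p: "p > 1" and M: "M \<ge> (1::nat)" and N: "N \<ge> M"
  shows "(\<Sum>n=M..N. real n powr (-p)) \<le> p/(p-1) * real M powr (1-p) - real N powr (1-p) / (p-1)"
  using N
proof (induction N rule: dec_induct)
  case base
  have "real M powr (-p) \<le> real M powr (1-p)"
    using M by (intro powr_mono) auto
  moreover have "p/(p-1) * real M powr (1-p) - real M powr (1-p) / (p-1) = ((p-1) * real M powr (1-p)) / (p-1)"
    by (simp add: diff_divide_distrib left_diff_distrib)
  moreover have "((p-1) * real M powr (1-p)) / (p-1) = real M powr (1-p)"
    using p by simp
  ultimately show ?case by simp
next
  case (step n)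
  have "real (Suc n) powr (-p) \<le> ((real (Suc n) - 1) powr (1-p) - real (Suc n) powr (1-p)) / (p-1)"
    using step M p by (intro step_ineq) auto
  also have "\<dots> = real n powr (1-p) / (p-1) - real (Suc n) powr (1-p) / (p-1)"
    by (simp add: diff_divide_distrib)
  finally have a: "real (Suc n) powr (-p) \<le> real n powr (1-p) / (p-1) - real (Suc n) powr (1-p) / (p-1)" .
  have "(\<Sum>k=M..Suc n. real k powr (-p)) = (\<Sum>k=M..n. real k powr (-p)) + real (Suc n) powr (-p)"
    using step by simp
  then show ?case using step.IH a by linarith
qed

lemma tele_fin:
  fixes p :: real
  assumes p: "p > 1" and M: "M \<ge> (1::nat)" and Q: "finite Q" "\<forall>n\<in>Q. n \<ge> M"
  shows "(\<Sum>n\<in>Q. real n powr (-p)) \<le> p/(p-1) * real M powr (1-p)"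
proof (cases "Q = {}")
  case True then show ?thesis using p by simp
next
  case False
  define N where "N = Max Q"
  have NM: "N \<ge> M" using False Q unfolding N_def by (meson Max_in)
  have "Q \<subseteq> {M..N}" using Q unfolding N_def by auto
  then have "(\<Sum>n\<in>Q. real n powr (-p)) \<le> (\<Sum>n=M..N. real n powr (-p))"
    by (intro sum_mono2) auto
  also have "\<dots> \<le> p/(p-1) * real M powr (1-p) - real N powr (1-p) / (p-1)"
    by (rule tele[OF p M NM])
  also have "\<dots> \<le> p/(p-1) * real M powr (1-p)" using p by simp
  finally show ?thesis .
qed

lemma nat_part:
  fixes p :: real
  assumes p: "p > 1" and M: "M \<ge> (1::nat)" and P: "finite P" "\<forall>h\<in>P. h \<ge> int M"
  shows "(\<Sum>h\<in>P. real_of_int \<bar>h\<bar> powr (-p)) \<le> p/(p-1) * real M powr (1-p)"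
proof -
  have inj: "inj_on nat P" using P M by (intro inj_onI) force
  have "(\<Sum>h\<in>P. real_of_int \<bar>h\<bar> powr (-p)) = (\<Sum>n\<in>nat ` P. real n powr (-p))"
    by (subst sum.reindex[OF inj]) (use P M in \<open>auto intro!: sum.cong\<close>)
  also have "\<dots> \<le> p/(p-1) * real M powr (1-p)"
    using P by (intro tele_fin[OF p M]) auto
  finally show ?thesis .
qed

lemma int_tail:
  fixes p :: real
  assumes p: "p > 1" and M: "M \<ge> (1::nat)" and P: "finite P" "\<forall>h\<in>P. \<bar>h\<bar> \<ge> int M"
  shows "(\<Sum>h\<in>P. real_of_int \<bar>h\<bar> powr (-p)) \<le> 2 * (p/(p-1) * real M powr (1-p))"
proof -
  let ?f = "\<lambda>h::int. real_of_int \<bar>h\<bar> powr (-p)"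
  have split: "P = {h\<in>P. h > 0} \<union> {h\<in>P. h < 0}" using P M by force
  have "(\<Sum>h\<in>P. ?f h) = (\<Sum>h\<in>{h\<in>P. h > 0}. ?f h) + (\<Sum>h\<in>{h\<in>P. h < 0}. ?f h)"
    by (subst split, rule sum.union_disjoint) (use P in auto)
  also have "(\<Sum>h\<in>{h\<in>P. h < 0}. ?f h) = (\<Sum>h\<in>uminus ` {h\<in>P. h < 0}. ?f h)"
    by (subst sum.reindex) (auto simp: inj_on_def)
  also have "(\<Sum>h\<in>{h\<in>P. h > 0}. ?f h) \<le> p/(p-1) * real M powr (1-p)"
    using P by (intro nat_part[OF p M]) auto
  also have "(\<Sum>h\<in>uminus ` {h\<in>P. h < 0}. ?f h) \<le> p/(p-1) * real M powr (1-p)"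
    using P by (intro nat_part[OF p M]) auto
  finally show ?thesis by simp
qed

lemma r1_ge1: "r1 s \<gamma> h \<ge> 1" unfolding r1_def by simp

lemma r1_zero: "r1 s \<gamma> 0 = 1" unfolding r1_def by simp

lemma inv_r1_le:
  assumes "h \<noteq> 0" "\<gamma> > 0"
  shows "1 / r1 s \<gamma> h \<le> \<gamma> * real_of_int \<bar>h\<bar> powr (-(2* s))"
proof -
  have pos: "real_of_int \<bar>h\<bar> powr (2* s) > 0" using assms by simp
  have "real_of_int \<bar>h\<bar> powr (2* s) / \<gamma> \<le> r1 s \<gamma> h" unfolding r1_def by simp
  then have "1 / r1 s \<gamma> h \<le> 1 / (real_of_int \<bar>h\<bar> powr (2* s) / \<gamma>)"
    using pos assms by (intro frac_le) auto
  also have "\<dots> = \<gamma> * real_of_int \<bar>h\<bar> powr (-(2* s))"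
    using assms by (simp add: powr_minus_divide)
  finally show ?thesis .
qed

lemma sum_inv_r1:
  assumes s: "s > 1/2" and g: "0 < \<gamma>" "\<gamma> \<le> 1" and P: "finite P"
  shows "(\<Sum>h\<in>P. 1 / r1 s \<gamma> h) \<le> 1 + 2 * (2* s / (2* s-1))"
proof -
  have "(\<Sum>h\<in>P. 1 / r1 s \<gamma> h) = (\<Sum>h\<in>P \<inter> {0}. 1 / r1 s \<gamma> h) + (\<Sum>h\<in>P - {0}. 1 / r1 s \<gamma> h)"
    using P by (metis Diff_eq sum.Int_Diff)
  also have "(\<Sum>h\<in>P \<inter> {0}. 1 / r1 s \<gamma> h) \<le> 1"
    by (cases "0 \<in> P") (auto simp: r1_zero Int_insert_right)
  also have "(\<Sum>h\<in>P - {0}. 1 / r1 s \<gamma> h) \<le> (\<Sum>h\<in>P - {0}. real_of_int \<bar>h\<bar> powr (-(2* s)))"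
  proof (rule sum_mono)
    fix h assume "h \<in> P - {0}"
    then have "1 / r1 s \<gamma> h \<le> \<gamma> * real_of_int \<bar>h\<bar> powr (-(2* s))" using g by (intro inv_r1_le) auto
    also have "\<dots> \<le> real_of_int \<bar>h\<bar> powr (-(2* s))" using g by (intro mult_left_le_one_le) auto
    finally show "1 / r1 s \<gamma> h \<le> real_of_int \<bar>h\<bar> powr (-(2* s))" by simp
  qed
  also have "\<dots> \<le> 2 * (2* s / (2* s-1) * real (1::nat) powr (1 - 2* s))"
    using s P by (intro int_tail) auto
  finally show ?thesis by simp
qed

lemma tail_inv_r1:
  assumes a: "\<alpha> > 1/2" and g: "0 < \<gamma>" "\<gamma> \<le> 1" and nu: "\<nu> > 1" and P: "finite P"
  shows "(\<Sum>h\<in>{h\<in>P. r1 \<alpha> \<gamma> h > \<nu>}. 1 / r1 \<alpha> \<gamma> h) \<le> 2 * (2*\<alpha> / (2*\<alpha>-1)) * \<nu> powr (1/(2*\<alpha>) - 1)"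
proof -
  define p where "p = 2*\<alpha>"
  have p: "p > 1" using a unfolding p_def by simp
  define t where "t = (\<nu>*\<gamma>) powr (1/p)"
  have t: "t > 0" using nu g unfolding t_def by simp
  define M where "M = nat \<lfloor>t\<rfloor> + 1"
  have M1: "M \<ge> 1" unfolding M_def by simp
  have "real M = of_int \<lfloor>t\<rfloor> + 1" using t by (simp add: M_def)
  moreover have "t < of_int (\<lfloor>t\<rfloor> + 1)" using floor_correct[of t] by blast
  ultimately have Mt: "real M \<ge> t" by simp
  let ?S = "{h\<in>P. r1 \<alpha> \<gamma> h > \<nu>}"
  have hS: "h \<noteq> 0 \<and> \<bar>h\<bar> \<ge> int M" if "h \<in> ?S" for h
  proof -
    have r: "r1 \<alpha> \<gamma> h > \<nu>" using that by simp
    then have "h \<noteq> 0" using nu by (auto simp: r1_zero)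
    have "real_of_int \<bar>h\<bar> powr p / \<gamma> > \<nu>" using r nu unfolding r1_def p_def by auto
    then have "real_of_int \<bar>h\<bar> powr p > \<nu> * \<gamma>" using g by (simp add: pos_less_divide_eq)
    then have "(real_of_int \<bar>h\<bar> powr p) powr (1/p) > (\<nu> * \<gamma>) powr (1/p)"
      using p nu g by (intro powr_less_mono2) auto
    then have "real_of_int \<bar>h\<bar> > t" unfolding t_def using p by (simp add: powr_powr)
    then have "\<bar>h\<bar> > \<lfloor>t\<rfloor>" by linarith
    then have "\<bar>h\<bar> \<ge> int M" unfolding M_def using t by simp
    with \<open>h \<noteq> 0\<close> show ?thesis by simp
  qed
  have "(\<Sum>h\<in>?S. 1 / r1 \<alpha> \<gamma> h) \<le> (\<Sum>h\<in>?S. \<gamma> * real_of_int \<bar>h\<bar> powr (-p))"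
    using hS g unfolding p_def by (intro sum_mono inv_r1_le) auto
  also have "\<dots> = \<gamma> * (\<Sum>h\<in>?S. real_of_int \<bar>h\<bar> powr (-p))" by (simp add: sum_distrib_left)
  also have "\<dots> \<le> \<gamma> * (2 * (p/(p-1) * real M powr (1-p)))"
    using g P hS by (intro mult_left_mono int_tail[OF p M1]) auto
  also have "\<dots> \<le> \<gamma> * (2 * (p/(p-1) * t powr (1-p)))"
    using g p t Mt by (intro mult_left_mono powr_mono2') auto
  also have "\<dots> = 2 * (p/(p-1)) * (\<gamma> * t powr (1-p))" by simp
  also have "\<gamma> * t powr (1-p) = \<gamma> powr (1/p) * \<nu> powr (1/p - 1)"
  proof -
    have "\<gamma> * t powr (1-p) = \<gamma> * (\<nu> powr ((1-p)/p) * \<gamma> powr ((1-p)/p))"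
      unfolding t_def by (simp add: powr_powr powr_mult)
    also have "\<dots> = \<nu> powr ((1-p)/p) * (\<gamma> * \<gamma> powr ((1-p)/p))" by simp
    also have "\<gamma> * \<gamma> powr ((1-p)/p) = \<gamma> powr (1 + (1-p)/p)" using g by (simp add: powr_mult_base)
    also have "1 + (1-p)/p = 1/p" using p by (simp add: field_simps)
    also have "(1-p)/p = 1/p - 1" using p by (simp add: field_simps)
    finally show ?thesis by simp
  qed
  also have "2 * (p/(p-1)) * (\<gamma> powr (1/p) * \<nu> powr (1/p - 1)) \<le> 2 * (p/(p-1)) * (1 * \<nu> powr (1/p - 1))"
    using p g by (intro mult_left_mono mult_right_mono powr_le1) auto
  finally show ?thesis unfolding p_def by simp
qed

definition ibox :: "nat \<Rightarrow> (nat \<Rightarrow> int set) \<Rightarrow> (nat \<Rightarrow> int) set" where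
  "ibox d P = {k. (\<forall>i<d. k i \<in> P i) \<and> (\<forall>i\<ge>d. k i = 0)}"

lemma ibox_bij: "bij_betw (\<lambda>k. restrict k {..<d}) (ibox d P) (PiE {..<d} P)"
proof (rule bij_betw_byWitness[where f' = "\<lambda>p i. if i < d then p i else 0"])
  show "\<forall>a\<in>ibox d P. (\<lambda>i. if i < d then restrict a {..<d} i else 0) = a"
    unfolding ibox_def by (auto simp: fun_eq_iff)
  show "\<forall>a'\<in>PiE {..<d} P. restrict (\<lambda>i. if i < d then a' i else 0) {..<d} = a'"
  proof
    fix a' assume a': "a' \<in> PiE {..<d} P"
    show "restrict (\<lambda>i. if i < d then a' i else 0) {..<d} = a'"
      using PiE_arb[OF a'] by (auto simp: fun_eq_iff)
  qed
  show "(\<lambda>k. restrict k {..<d}) ` ibox d P \<subseteq> PiE {..<d} P"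
  proof
    fix x assume "x \<in> (\<lambda>k. restrict k {..<d}) ` ibox d P"
    then obtain k where k: "k \<in> ibox d P" and x: "x = restrict k {..<d}" by auto
    show "x \<in> PiE {..<d} P" unfolding x
      by (rule restrict_PiE_iff[THEN iffD2]) (use k in \<open>auto simp: ibox_def\<close>)
  qed
  show "(\<lambda>p i. if i < d then p i else 0) ` PiE {..<d} P \<subseteq> ibox d P"
  proof
    fix x assume "x \<in> (\<lambda>p i. if i < d then p i else 0) ` PiE {..<d} P"
    then obtain p where p: "p \<in> PiE {..<d} P" and x: "x = (\<lambda>i. if i < d then p i else 0)" by auto
    show "x \<in> ibox d P" unfolding ibox_def x using PiE_mem[OF p] by simp
  qed
qed

lemma ibox_finite: "(\<And>i. i < d \<Longrightarrow> finite (P i)) \<Longrightarrow> finite (ibox d P)"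
  using bij_betw_finite[OF ibox_bij] by (auto intro!: finite_PiE)

lemma ibox_card: "(\<And>i. i < d \<Longrightarrow> finite (P i)) \<Longrightarrow> card (ibox d P) = (\<Prod>i<d. card (P i))"
  using bij_betw_same_card[OF ibox_bij] by (simp add: card_PiE)

lemma ibox_sum:
  fixes w :: "nat \<Rightarrow> int \<Rightarrow> real"
  assumes "\<And>i. i < d \<Longrightarrow> finite (P i)"
  shows "(\<Sum>k\<in>ibox d P. \<Prod>i<d. w i (k i)) = (\<Prod>i<d. \<Sum>h\<in>P i. w i h)"
proof -
  have "(\<Prod>i<d. \<Sum>h\<in>P i. w i h) = (\<Sum>g\<in>PiE {..<d} P. \<Prod>i<d. w i (g i))"
    using assms by (intro prod_sum_PiE) auto
  also have "\<dots> = (\<Sum>k\<in>ibox d P. \<Prod>i<d. w i (restrict k {..<d} i))"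
    by (rule sum.reindex_bij_betw[OF ibox_bij, symmetric])
  also have "\<dots> = (\<Sum>k\<in>ibox d P. \<Prod>i<d. w i (k i))"
    by (intro sum.cong prod.cong) auto
  finally show ?thesis by simp
qed

lemma sub_box: "F \<subseteq> Zd d \<Longrightarrow> F \<subseteq> ibox d (\<lambda>i. (\<lambda>k. k i) ` F)"
  unfolding ibox_def Zd_def by auto

lemma rw_pos: "rw s \<gamma> d k \<ge> 1"
  unfolding rw_def using r1_ge1 by (intro prod_ge_1) auto

lemma inv_rw: "1 / rw s \<gamma> d k = (\<Prod>i<d. 1 / r1 s (\<gamma> i) (k i))"
  unfolding rw_def by (simp add: prod_dividef)

lemma ibox_bound:
  fixes w :: "nat \<Rightarrow> int \<Rightarrow> real"
  assumes F: "finite F" "F \<subseteq> Zd d" and w0: "\<And>i h. w i h \<ge> 0"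
  shows "(\<Sum>k\<in>F. \<Prod>i<d. w i (k i)) \<le> (\<Prod>i<d. \<Sum>h\<in>(\<lambda>k. k i) ` F. w i h)"
proof -
  have "(\<Sum>k\<in>F. \<Prod>i<d. w i (k i)) \<le> (\<Sum>k\<in>ibox d (\<lambda>i. (\<lambda>k. k i) ` F). \<Prod>i<d. w i (k i))"
    using F sub_box[OF F(2)] w0 by (intro sum_mono2 ibox_finite prod_nonneg) auto
  also have "\<dots> = (\<Prod>i<d. \<Sum>h\<in>(\<lambda>k. k i) ` F. w i h)"
    using F by (intro ibox_sum) auto
  finally show ?thesis .
qed

definition S1 :: "real \<Rightarrow> real" where "S1 s = 1 + 2 * (2 * s / (2 * s - 1))"

lemma S1_ge1: "s > 1/2 \<Longrightarrow> S1 s \<ge> 1"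
  unfolding S1_def by simp

lemma sum_inv_rw:
  assumes s: "s > 1/2" and g: "\<forall>j<d. 0 < \<gamma> j \<and> \<gamma> j \<le> 1" and F: "finite F" "F \<subseteq> Zd d"
  shows "(\<Sum>k\<in>F. 1 / rw s \<gamma> d k) \<le> S1 s ^ d"
proof -
  have "(\<Sum>k\<in>F. 1 / rw s \<gamma> d k) = (\<Sum>k\<in>F. \<Prod>i<d. 1 / r1 s (\<gamma> i) (k i))"
    by (simp add: inv_rw)
  also have "\<dots> \<le> (\<Prod>i<d. \<Sum>h\<in>(\<lambda>k. k i) ` F. 1 / r1 s (\<gamma> i) h)"
    using F by (intro ibox_bound) (auto intro: order_trans[OF zero_le_one r1_ge1])
  also have "\<dots> \<le> (\<Prod>i<d. S1 s)"
    using F s g unfolding S1_def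
    by (intro prod_mono conjI sum_nonneg sum_inv_r1) (auto intro: order_trans[OF zero_le_one r1_ge1])
  finally show ?thesis by simp
qed

definition T1 :: "real \<Rightarrow> real \<Rightarrow> real" where
  "T1 \<alpha> \<nu> = 2 * (2*\<alpha> / (2*\<alpha>-1)) * \<nu> powr (1/(2*\<alpha>) - 1)"

lemma tail_inv_rw:
  assumes a: "\<alpha> > 1/2" and g: "\<forall>j<d. 0 < \<gamma> j \<and> \<gamma> j \<le> 1" and nu: "\<nu> > 1"
    and F: "finite F" "F \<subseteq> Zd d - Rset \<alpha> \<nu> \<gamma> d"
  shows "(\<Sum>k\<in>F. 1 / rw \<alpha> \<gamma> d k) \<le> real d * (S1 \<alpha> ^ d * T1 \<alpha> \<nu>)"
proof -
  define w where "w j i h = (if i = j then (if r1 \<alpha> (\<gamma> i) h > \<nu> then 1 / r1 \<alpha> (\<gamma> i) h else 0)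
     else 1 / r1 \<alpha> (\<gamma> i) h)" for j i h
  have w0: "w j i h \<ge> 0" for j i h unfolding w_def using r1_ge1[of \<alpha> "\<gamma> i" h] by auto
  have T0: "T1 \<alpha> \<nu> \<ge> 0" unfolding T1_def using a by auto
  have pt: "1 / rw \<alpha> \<gamma> d k \<le> (\<Sum>j<d. \<Prod>i<d. w j i (k i))" if k: "k \<in> F" for k
  proof -
    from k F have "\<not> (\<forall>j<d. r1 \<alpha> (\<gamma> j) (k j) \<le> \<nu>)"
      unfolding Rset_def by auto
    then obtain j where j: "j < d" "r1 \<alpha> (\<gamma> j) (k j) > \<nu>"
      by (auto simp: not_le)
    have "1 / rw \<alpha> \<gamma> d k = (\<Prod>i<d. w j i (k i))"
      unfolding inv_rw w_def using j by (intro prod.cong) auto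
    also have "\<dots> \<le> (\<Sum>j<d. \<Prod>i<d. w j i (k i))"
      using j w0 by (intro member_le_sum prod_nonneg) auto
    finally show ?thesis .
  qed
  have "(\<Sum>k\<in>F. 1 / rw \<alpha> \<gamma> d k) \<le> (\<Sum>k\<in>F. \<Sum>j<d. \<Prod>i<d. w j i (k i))"
    using pt by (rule sum_mono)
  also have "\<dots> = (\<Sum>j<d. \<Sum>k\<in>F. \<Prod>i<d. w j i (k i))" by (rule sum.swap)
  also have "\<dots> \<le> (\<Sum>j<d. S1 \<alpha> ^ d * T1 \<alpha> \<nu>)"
  proof (rule sum_mono)
    fix j assume j: "j \<in> {..<d}"
    have "(\<Sum>k\<in>F. \<Prod>i<d. w j i (k i)) \<le> (\<Prod>i<d. \<Sum>h\<in>(\<lambda>k. k i) ` F. w j i h)"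
      using F w0 by (intro ibox_bound) auto
    also have "\<dots> \<le> (\<Prod>i<d. if i = j then T1 \<alpha> \<nu> else S1 \<alpha>)"
    proof (rule prod_mono)
      fix i assume i: "i \<in> {..<d}"
      have fin: "finite ((\<lambda>k. k i) ` F)" using F by simp
      show "0 \<le> (\<Sum>h\<in>(\<lambda>k. k i) ` F. w j i h) \<and>
            (\<Sum>h\<in>(\<lambda>k. k i) ` F. w j i h) \<le> (if i = j then T1 \<alpha> \<nu> else S1 \<alpha>)"
      proof (intro conjI)
        show "0 \<le> (\<Sum>h\<in>(\<lambda>k. k i) ` F. w j i h)" using w0 by (intro sum_nonneg) auto
      next
        show "(\<Sum>h\<in>(\<lambda>k. k i) ` F. w j i h) \<le> (if i = j then T1 \<alpha> \<nu> else S1 \<alpha>)"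
        proof (cases "i = j")
          case True
          have "(\<Sum>h\<in>(\<lambda>k. k i) ` F. w j i h) = (\<Sum>h\<in>{h\<in>(\<lambda>k. k i) ` F. r1 \<alpha> (\<gamma> i) h > \<nu>}. 1 / r1 \<alpha> (\<gamma> i) h)"
            using fin unfolding w_def True by (simp add: sum.inter_filter)
          also have "\<dots> \<le> T1 \<alpha> \<nu>"
            unfolding T1_def using a g i nu fin by (intro tail_inv_r1) auto
          finally show ?thesis using True by simp
        next
          case False
          have "(\<Sum>h\<in>(\<lambda>k. k i) ` F. w j i h) = (\<Sum>h\<in>(\<lambda>k. k i) ` F. 1 / r1 \<alpha> (\<gamma> i) h)"
            using False unfolding w_def by simp
          also have "\<dots> \<le> S1 \<alpha>"
            unfolding S1_def using a g i fin by (intro sum_inv_r1) auto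
          finally show ?thesis using False by simp
        qed
      qed
    qed
    also have "\<dots> = T1 \<alpha> \<nu> * (\<Prod>i\<in>{..<d} - {j}. S1 \<alpha>)"
      using j by (subst prod.remove[of _ j]) (auto intro!: prod.cong)
    also have "\<dots> \<le> T1 \<alpha> \<nu> * S1 \<alpha> ^ d"
    proof -
      have "(\<Prod>i\<in>{..<d} - {j}. S1 \<alpha>) = S1 \<alpha> ^ (d - 1)" using j by simp
      also have "\<dots> \<le> S1 \<alpha> ^ d" using S1_ge1[OF a] by (intro power_increasing) auto
      finally show ?thesis using T0 by (intro mult_left_mono) auto
    qed
    finally show "(\<Sum>k\<in>F. \<Prod>i<d. w j i (k i)) \<le> S1 \<alpha> ^ d * T1 \<alpha> \<nu>" by (simp add: mult.commute)
  qed
  also have "\<dots> = real d * (S1 \<alpha> ^ d * T1 \<alpha> \<nu>)" by simp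
  finally show ?thesis .
qed

lemma has_sum_norm_bound:
  fixes f :: "'a \<Rightarrow> complex"
  assumes "(f has_sum v) A" "\<And>F. finite F \<Longrightarrow> F \<subseteq> A \<Longrightarrow> (\<Sum>k\<in>F. cmod (f k)) \<le> B"
  shows "cmod v \<le> B"
proof -
  have "((\<lambda>F. cmod (sum f F)) \<longlongrightarrow> cmod v) (finite_subsets_at_top A)"
    using assms(1) unfolding has_sum_def by (rule tendsto_norm)
  moreover have "eventually (\<lambda>F. cmod (sum f F) \<le> B) (finite_subsets_at_top A)"
  proof (rule eventually_finite_subsets_at_top_weakI)
    fix F assume "finite F" "F \<subseteq> A"
    then show "cmod (sum f F) \<le> B" using assms(2) norm_sum order_trans by blast
  qed
  ultimately show ?thesis
    using finite_subsets_at_top_neq_bot tendsto_upperbound by blast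
qed

lemma wcs:
  fixes y p :: "'a \<Rightarrow> real"
  assumes "\<And>k. k \<in> K \<Longrightarrow> p k > 0"
  shows "(\<Sum>k\<in>K. y k)\<^sup>2 \<le> (\<Sum>k\<in>K. p k) * (\<Sum>k\<in>K. (y k)\<^sup>2 / p k)"
proof -
  have "(\<Sum>k\<in>K. sqrt (p k) * (y k / sqrt (p k)))\<^sup>2 \<le> (\<Sum>k\<in>K. (sqrt (p k))\<^sup>2) * (\<Sum>k\<in>K. (y k / sqrt (p k))\<^sup>2)"
    by (rule Cauchy_Schwarz_ineq_sum)
  moreover have "(\<Sum>k\<in>K. sqrt (p k) * (y k / sqrt (p k))) = (\<Sum>k\<in>K. y k)"
  proof (intro sum.cong refl)
    fix k assume "k \<in> K"
    then have "sqrt (p k) > 0" using assms by simp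
    then show "sqrt (p k) * (y k / sqrt (p k)) = y k" by simp
  qed
  moreover have "(\<Sum>k\<in>K. (sqrt (p k))\<^sup>2) = (\<Sum>k\<in>K. p k)"
    using assms by (intro sum.cong) (auto simp: less_imp_le)
  moreover have "(\<Sum>k\<in>K. (y k / sqrt (p k))\<^sup>2) = (\<Sum>k\<in>K. (y k)\<^sup>2 / p k)"
    using assms by (intro sum.cong refl) (simp add: power_divide less_imp_le)
  ultimately show ?thesis by simp
qed

lemma cs_fin:
  fixes a w :: "'a \<Rightarrow> real"
  assumes "\<And>k. k \<in> F \<Longrightarrow> w k > 0" "\<And>k. k \<in> F \<Longrightarrow> a k \<ge> 0"
  shows "(\<Sum>k\<in>F. a k) \<le> sqrt (\<Sum>k\<in>F. 1 / w k) * sqrt (\<Sum>k\<in>F. w k * (a k)\<^sup>2)"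
proof -
  have "(\<Sum>k\<in>F. a k)\<^sup>2 \<le> (\<Sum>k\<in>F. 1 / w k) * (\<Sum>k\<in>F. (a k)\<^sup>2 / (1 / w k))"
    using assms by (intro wcs) auto
  also have "(\<Sum>k\<in>F. (a k)\<^sup>2 / (1 / w k)) = (\<Sum>k\<in>F. w k * (a k)\<^sup>2)" by (simp add: mult.commute)
  finally have "(\<Sum>k\<in>F. a k) \<le> sqrt ((\<Sum>k\<in>F. 1 / w k) * (\<Sum>k\<in>F. w k * (a k)\<^sup>2))"
    by (rule real_le_rsqrt)
  then show ?thesis by (simp add: real_sqrt_mult)
qed

lemma kor_summable: "g \<in> korobov s \<gamma> d \<Longrightarrow> (\<lambda>k. rw s \<gamma> d k * (cmod (fourier d g k))\<^sup>2) summable_on Zd d"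
  unfolding korobov_def by auto

lemma kor_hassum: "g \<in> korobov s \<gamma> d \<Longrightarrow> x \<in> cube d \<Longrightarrow> ((\<lambda>k. fourier d g k * omega d k x) has_sum g x) (Zd d)"
  unfolding korobov_def by auto

lemma kor_norm_nonneg: "korobov_norm s \<gamma> d g \<ge> 0"
  unfolding korobov_norm_def
  by (auto intro!: infsum_nonneg mult_nonneg_nonneg order_trans[OF zero_le_one rw_pos])

lemma kor_norm_sq: "g \<in> korobov s \<gamma> d \<Longrightarrow>
   (korobov_norm s \<gamma> d g)\<^sup>2 = (\<Sum>\<^sub>\<infinity>k\<in>Zd d. rw s \<gamma> d k * (cmod (fourier d g k))\<^sup>2)"
  unfolding korobov_norm_def
  by (subst real_sqrt_pow2) (auto intro!: infsum_nonneg mult_nonneg_nonneg order_trans[OF zero_le_one rw_pos])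

lemma kor_fin_le: "g \<in> korobov s \<gamma> d \<Longrightarrow> finite F \<Longrightarrow> F \<subseteq> Zd d \<Longrightarrow>
   (\<Sum>k\<in>F. rw s \<gamma> d k * (cmod (fourier d g k))\<^sup>2) \<le> (korobov_norm s \<gamma> d g)\<^sup>2"
  by (subst kor_norm_sq) (auto intro!: finite_sum_le_infsum kor_summable mult_nonneg_nonneg order_trans[OF zero_le_one rw_pos])

lemma kor_abs_fin:
  assumes "g \<in> korobov s \<gamma> d" "finite F" "F \<subseteq> Zd d"
  shows "(\<Sum>k\<in>F. cmod (fourier d g k)) \<le> sqrt (\<Sum>k\<in>F. 1 / rw s \<gamma> d k) * korobov_norm s \<gamma> d g"
proof -
  have a: "(\<Sum>k\<in>F. cmod (fourier d g k)) \<le> sqrt (\<Sum>k\<in>F. 1 / rw s \<gamma> d k) * sqrt (\<Sum>k\<in>F. rw s \<gamma> d k * (cmod (fourier d g k))\<^sup>2)"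
    by (intro cs_fin) (auto intro: less_le_trans[OF zero_less_one] rw_pos)
  have "sqrt (\<Sum>k\<in>F. rw s \<gamma> d k * (cmod (fourier d g k))\<^sup>2) \<le> sqrt ((korobov_norm s \<gamma> d g)\<^sup>2)"
    using assms by (intro real_sqrt_le_mono kor_fin_le)
  also have "sqrt ((korobov_norm s \<gamma> d g)\<^sup>2) = korobov_norm s \<gamma> d g"
    using kor_norm_nonneg by simp
  finally have b: "sqrt (\<Sum>k\<in>F. rw s \<gamma> d k * (cmod (fourier d g k))\<^sup>2) \<le> korobov_norm s \<gamma> d g" .
  have "0 \<le> sqrt (\<Sum>k\<in>F. 1 / rw s \<gamma> d k)"
    by (intro real_sqrt_ge_zero sum_nonneg) (auto intro: order_trans[OF zero_le_one rw_pos])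
  then show ?thesis using order_trans[OF a mult_left_mono[OF b]] by simp
qed

lemma int_fourier0: "integral\<^sup>L (cube_measure d) f = fourier d f (\<lambda>_. 0)"
  unfolding fourier_def by (simp add: omega_zero)

lemma fourier_prod:
  assumes g: "g \<in> korobov s \<gamma> d" and K: "finite K"
  shows "fourier d (\<lambda>x. g x * phi_K d K N xs c x) m =
     (\<Sum>k\<in>K. phi_check d N xs c k * fourier d g (\<lambda>i. m i + k i))"
proof -
  have eq: "g x * phi_K d K N xs c x * cnj (omega d m x) =
     (\<Sum>k\<in>K. phi_check d N xs c k * (g x * cnj (omega d (\<lambda>i. m i + k i) x)))" for x
    unfolding phi_K_def sum_distrib_left sum_distrib_right
    by (intro sum.cong refl) (simp add: cnj_omega_mult[symmetric] mult_ac)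
  have int: "integrable (cube_measure d) (\<lambda>x. phi_check d N xs c k * (g x * cnj (omega d (\<lambda>i. m i + k i) x)))" for k
    using kor_int_omega[OF g] by (rule integrable_mult_right)
  have "integral\<^sup>L (cube_measure d) (\<lambda>x. \<Sum>k\<in>K. phi_check d N xs c k * (g x * cnj (omega d (\<lambda>i. m i + k i) x)))
     = (\<Sum>k\<in>K. integral\<^sup>L (cube_measure d) (\<lambda>x. phi_check d N xs c k * (g x * cnj (omega d (\<lambda>i. m i + k i) x))))"
    by (rule Bochner_Integration.integral_sum) (rule int)
  then show ?thesis
    unfolding fourier_def eq by simp
qed

lemma r1_add:
  assumes b: "\<beta> \<ge> 0" and g: "\<gamma> > 0"
  shows "r1 \<beta> \<gamma> (a + b) \<le> 2 powr (2*\<beta>) * r1 \<beta> \<gamma> a * r1 \<beta> \<gamma> b"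
proof -
  have ra: "r1 \<beta> \<gamma> a \<ge> 1" and rb: "r1 \<beta> \<gamma> b \<ge> 1" by (rule r1_ge1)+
  have two: "2 powr (2*\<beta>) \<ge> 1" using b by (intro ge_one_powr_ge_zero) auto
  have key: "real_of_int \<bar>a + b\<bar> powr (2*\<beta>) / \<gamma> \<le> 2 powr (2*\<beta>) * r1 \<beta> \<gamma> a * r1 \<beta> \<gamma> b"
    if ab: "\<bar>a\<bar> \<le> \<bar>b\<bar>" and ra: "r1 \<beta> \<gamma> a \<ge> 1" and rb: "r1 \<beta> \<gamma> b \<ge> 1"
    for a b :: int
  proof -
    have "real_of_int \<bar>a + b\<bar> \<le> 2 * real_of_int \<bar>b\<bar>" using ab by linarith
    then have "real_of_int \<bar>a + b\<bar> powr (2*\<beta>) \<le> (2 * real_of_int \<bar>b\<bar>) powr (2*\<beta>)"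
      using b by (intro powr_mono2) auto
    also have "\<dots> = 2 powr (2*\<beta>) * real_of_int \<bar>b\<bar> powr (2*\<beta>)" by (simp add: powr_mult)
    finally have "real_of_int \<bar>a + b\<bar> powr (2*\<beta>) / \<gamma> \<le> 2 powr (2*\<beta>) * (real_of_int \<bar>b\<bar> powr (2*\<beta>) / \<gamma>)"
      using g by (simp add: divide_right_mono)
    also have "\<dots> \<le> 2 powr (2*\<beta>) * r1 \<beta> \<gamma> b" unfolding r1_def by (intro mult_left_mono) auto
    also have "\<dots> \<le> 2 powr (2*\<beta>) * r1 \<beta> \<gamma> a * r1 \<beta> \<gamma> b"
      using ra rb by (simp add: mult_le_cancel_left1 mult.assoc)
    finally show ?thesis .
  qed
  have "real_of_int \<bar>a + b\<bar> powr (2*\<beta>) / \<gamma> \<le> 2 powr (2*\<beta>) * r1 \<beta> \<gamma> a * r1 \<beta> \<gamma> b"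
  proof (cases "\<bar>a\<bar> \<le> \<bar>b\<bar>")
    case True then show ?thesis using key ra rb by blast
  next
    case False
    then have "real_of_int \<bar>b + a\<bar> powr (2*\<beta>) / \<gamma> \<le> 2 powr (2*\<beta>) * r1 \<beta> \<gamma> b * r1 \<beta> \<gamma> a"
      using key[of b a] ra rb by simp
    then show ?thesis by (simp add: add.commute mult_ac)
  qed
  moreover have "1 * (1 * 1) \<le> 2 powr (2*\<beta>) * (r1 \<beta> \<gamma> a * r1 \<beta> \<gamma> b)"
    using ra rb two by (intro mult_mono) auto
  then have "1 \<le> 2 powr (2*\<beta>) * r1 \<beta> \<gamma> a * r1 \<beta> \<gamma> b" by (simp add: mult.assoc)
  ultimately show ?thesis unfolding r1_def[of \<beta> \<gamma> "a+b"] by simp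
qed

lemma r1_neg: "r1 \<beta> \<gamma> (- h) = r1 \<beta> \<gamma> h" unfolding r1_def by simp

lemma rw_shift:
  assumes b: "\<beta> \<ge> 0" and g: "\<forall>j<d. 0 < \<gamma> j"
  shows "rw \<beta> \<gamma> d m \<le> (2 powr (2*\<beta>))^d * rw \<beta> \<gamma> d (\<lambda>i. m i + k i) * rw \<beta> \<gamma> d k"
proof -
  have "rw \<beta> \<gamma> d m \<le> (\<Prod>i<d. 2 powr (2*\<beta>) * r1 \<beta> (\<gamma> i) (m i + k i) * r1 \<beta> (\<gamma> i) (k i))"
    unfolding rw_def
  proof (rule prod_mono)
    fix i assume i: "i \<in> {..<d}"
    have "r1 \<beta> (\<gamma> i) (m i) = r1 \<beta> (\<gamma> i) ((m i + k i) + (- k i))" by simp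
    also have "\<dots> \<le> 2 powr (2*\<beta>) * r1 \<beta> (\<gamma> i) (m i + k i) * r1 \<beta> (\<gamma> i) (- k i)"
      using b g i by (intro r1_add) auto
    finally show "0 \<le> r1 \<beta> (\<gamma> i) (m i) \<and> r1 \<beta> (\<gamma> i) (m i) \<le> 2 powr (2*\<beta>) * r1 \<beta> (\<gamma> i) (m i + k i) * r1 \<beta> (\<gamma> i) (k i)"
      using order_trans[OF zero_le_one r1_ge1] by (simp add: r1_neg)
  qed
  also have "\<dots> = (2 powr (2*\<beta>))^d * rw \<beta> \<gamma> d (\<lambda>i. m i + k i) * rw \<beta> \<gamma> d k"
    unfolding rw_def by (simp add: prod.distrib)
  finally show ?thesis .
qed

lemma r1_mono:
  assumes "\<beta> \<le> \<alpha>" "\<gamma> > 0"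
  shows "r1 \<beta> \<gamma> h \<le> r1 \<alpha> \<gamma> h"
proof (cases "h = 0")
  case True then show ?thesis by (simp add: r1_zero)
next
  case False
  then have "real_of_int \<bar>h\<bar> \<ge> 1" by linarith
  then have "real_of_int \<bar>h\<bar> powr (2*\<beta>) \<le> real_of_int \<bar>h\<bar> powr (2*\<alpha>)"
    using assms by (intro powr_mono) auto
  then have "real_of_int \<bar>h\<bar> powr (2*\<beta>) / \<gamma> \<le> real_of_int \<bar>h\<bar> powr (2*\<alpha>) / \<gamma>"
    using assms by (simp add: divide_right_mono)
  then show ?thesis unfolding r1_def by simp
qed

lemma rw_mono:
  assumes "\<beta> \<le> \<alpha>" "\<forall>j<d. 0 < \<gamma> j"
  shows "rw \<beta> \<gamma> d k \<le> rw \<alpha> \<gamma> d k"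
  unfolding rw_def using assms
  by (intro prod_mono) (auto intro: r1_mono order_trans[OF zero_le_one r1_ge1])

lemma shift_bij:
  assumes "k \<in> Zd d"
  shows "bij_betw (\<lambda>m i. m i + k i) (Zd d) (Zd d)"
  by (rule bij_betw_byWitness[where f' = "\<lambda>m i. m i - k i"]) (use assms in \<open>auto simp: Zd_def\<close>)

lemma has_sum_finite_sum:
  fixes f :: "'i \<Rightarrow> 'a \<Rightarrow> complex"
  assumes "finite K" "\<And>k. k \<in> K \<Longrightarrow> (f k has_sum a k) A"
  shows "((\<lambda>x. \<Sum>k\<in>K. f k x) has_sum (\<Sum>k\<in>K. a k)) A"
  using assms
proof (induction K rule: finite_induct)
  case empty then show ?case by simp
next
  case (insert k K)
  then show ?case by (simp add: has_sum_add)
qed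

lemma h_hassum:
  assumes g: "g \<in> korobov s \<gamma> d" and K: "finite K" "K \<subseteq> Zd d" and x: "x \<in> cube d"
  shows "((\<lambda>m. (\<Sum>k\<in>K. phi_check d N xs c k * fourier d g (\<lambda>i. m i + k i)) * omega d m x)
           has_sum (g x * phi_K d K N xs c x)) (Zd d)"
proof -
  have each: "((\<lambda>m. phi_check d N xs c k * fourier d g (\<lambda>i. m i + k i) * omega d m x)
     has_sum (phi_check d N xs c k * cnj (omega d k x) * g x)) (Zd d)" if k: "k \<in> K" for k
  proof -
    let ?c = "phi_check d N xs c k * cnj (omega d k x)"
    have "((\<lambda>j. ?c * (fourier d g j * omega d j x)) has_sum (?c * g x)) (Zd d)"
      by (intro has_sum_cmult_right kor_hassum[OF g x])
    then have hs: "((\<lambda>m. ?c * (fourier d g (\<lambda>i. m i + k i) * omega d (\<lambda>i. m i + k i) x)) has_sum (?c * g x)) (Zd d)"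
      using has_sum_reindex_bij_betw[OF shift_bij[of k d], of "\<lambda>j. ?c * (fourier d g j * omega d j x)"] k K
      by auto
    have pt: "?c * (fourier d g (\<lambda>i. m i + k i) * omega d (\<lambda>i. m i + k i) x)
       = phi_check d N xs c k * fourier d g (\<lambda>i. m i + k i) * omega d m x" for m
    proof -
      have "omega d (\<lambda>i. m i + k i) x * cnj (omega d k x) = omega d m x"
        by (simp add: omega_mult_cnj)
      then show ?thesis by (metis (no_types, lifting) mult.assoc mult.commute)
    qed
    have fe: "(\<lambda>m. ?c * (fourier d g (\<lambda>i. m i + k i) * omega d (\<lambda>i. m i + k i) x))
       = (\<lambda>m. phi_check d N xs c k * fourier d g (\<lambda>i. m i + k i) * omega d m x)"
      by (rule ext) (rule pt)
    show ?thesis using hs unfolding fe .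
  qed
  have "((\<lambda>m. \<Sum>k\<in>K. phi_check d N xs c k * fourier d g (\<lambda>i. m i + k i) * omega d m x)
     has_sum (\<Sum>k\<in>K. phi_check d N xs c k * cnj (omega d k x) * g x)) (Zd d)"
    by (rule has_sum_finite_sum[OF K(1) each])
  moreover have "(\<Sum>k\<in>K. phi_check d N xs c k * cnj (omega d k x) * g x) = g x * phi_K d K N xs c x"
    unfolding phi_K_def by (simp add: sum_distrib_left sum_distrib_right mult_ac)
  ultimately show ?thesis by (simp add: sum_distrib_right)
qed

lemma kor_meas: "f \<in> korobov s \<gamma> d \<Longrightarrow> f \<in> borel_measurable (cube_measure d)"
  unfolding korobov_def by auto

lemma sqnorm_meas:
  fixes f :: "_ \<Rightarrow> complex"
  shows "f \<in> borel_measurable M \<Longrightarrow> (\<lambda>x. (cmod (f x))\<^sup>2) \<in> borel_measurable M"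
  by (rule borel_measurable_continuous_on[where f = "\<lambda>w. (cmod w)\<^sup>2"]) (auto intro!: continuous_intros)

lemma fourier_scale: "fourier d (\<lambda>x. z * f x) m = z * fourier d f m"
  unfolding fourier_def by (simp add: mult.assoc)

lemma kor_scale:
  assumes f: "f \<in> korobov s \<gamma> d"
  shows "(\<lambda>x. z * f x) \<in> korobov s \<gamma> d"
    and "korobov_norm s \<gamma> d (\<lambda>x. z * f x) = cmod z * korobov_norm s \<gamma> d f"
proof -
  have m: "(\<lambda>x. z * f x) \<in> borel_measurable (cube_measure d)"
    using kor_meas[OF f] by (intro borel_measurable_times borel_measurable_const)
  have i: "integrable (cube_measure d) (\<lambda>x. (cmod (z * f x))\<^sup>2)"
  proof -
    have "integrable (cube_measure d) (\<lambda>x. (cmod z)\<^sup>2 * (cmod (f x))\<^sup>2)"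
      using f unfolding korobov_def by auto
    then show ?thesis by (simp add: norm_mult power_mult_distrib)
  qed
  have eq: "rw s \<gamma> d k * (cmod (fourier d (\<lambda>x. z * f x) k))\<^sup>2 = (cmod z)\<^sup>2 * (rw s \<gamma> d k * (cmod (fourier d f k))\<^sup>2)" for k
    by (simp add: fourier_scale norm_mult power_mult_distrib)
  have su: "(\<lambda>k. rw s \<gamma> d k * (cmod (fourier d (\<lambda>x. z * f x) k))\<^sup>2) summable_on Zd d"
    unfolding eq by (intro summable_on_cmult_right kor_summable[OF f])
  have hs: "((\<lambda>k. fourier d (\<lambda>x. z * f x) k * omega d k x) has_sum (z * f x)) (Zd d)" if x: "x \<in> cube d" for x
    using has_sum_cmult_right[OF kor_hassum[OF f x], of z] by (simp add: fourier_scale mult.assoc)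
  show "(\<lambda>x. z * f x) \<in> korobov s \<gamma> d"
    unfolding korobov_def using m i su hs by auto
  have "korobov_norm s \<gamma> d (\<lambda>x. z * f x) = sqrt ((cmod z)\<^sup>2 * (\<Sum>\<^sub>\<infinity>k\<in>Zd d. rw s \<gamma> d k * (cmod (fourier d f k))\<^sup>2))"
    unfolding korobov_norm_def eq by (simp add: infsum_cmult_right')
  also have "\<dots> = cmod z * korobov_norm s \<gamma> d f"
    unfolding korobov_norm_def by (simp add: real_sqrt_mult)
  finally show "korobov_norm s \<gamma> d (\<lambda>x. z * f x) = cmod z * korobov_norm s \<gamma> d f" .
qed

lemma phi_meas: "(\<lambda>x. phi_K d K N xs c x) \<in> borel_measurable (cube_measure d)"
  unfolding phi_K_def cnj_omega
  by (intro borel_measurable_sum borel_measurable_times borel_measurable_const omega_meas)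

lemma phi_bound: "cmod (phi_K d K N xs c x) \<le> (\<Sum>k\<in>K. cmod (phi_check d N xs c k))"
  unfolding phi_K_def
  by (rule order_trans[OF norm_sum]) (simp add: norm_mult)

lemma h_norm_fin:
  fixes a :: "(nat \<Rightarrow> int) \<Rightarrow> complex"
  assumes g: "g \<in> korobov \<alpha> \<gamma> d" and b: "0 \<le> \<beta>" "\<beta> \<le> \<alpha>" and gam: "\<forall>j<d. 0 < \<gamma> j"
    and K: "finite K" "K \<subseteq> Zd d" and a: "\<forall>k\<in>K. cmod (a k) \<le> \<mu>"
    and F: "finite F" "F \<subseteq> Zd d"
  shows "(\<Sum>m\<in>F. rw \<beta> \<gamma> d m * (cmod (\<Sum>k\<in>K. a k * fourier d g (\<lambda>i. m i + k i)))\<^sup>2)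
     \<le> \<mu>\<^sup>2 * ((2 powr (2*\<beta>))^d * (\<Sum>k\<in>K. rw \<beta> \<gamma> d k)) * (real (card K) * (korobov_norm \<alpha> \<gamma> d g)\<^sup>2)"
proof -
  define c where "c = (2 powr (2*\<beta>))^d"
  define R where "R = rw \<beta> \<gamma> d"
  define G where "G j = cmod (fourier d g j)" for j
  define sh where "sh k m = (\<lambda>i::nat. m i + k i)" for k m :: "nat \<Rightarrow> int"
  have c0: "c > 0" unfolding c_def by simp
  have R1: "R k \<ge> 1" for k unfolding R_def by (rule rw_pos)
  have G0: "G j \<ge> 0" for j unfolding G_def by simp
  have per: "R m * (cmod (\<Sum>k\<in>K. a k * fourier d g (sh k m)))\<^sup>2
      \<le> \<mu>\<^sup>2 * (c * (\<Sum>k\<in>K. R k)) * (\<Sum>k\<in>K. R (sh k m) * (G (sh k m))\<^sup>2)" for m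
  proof (cases "K = {}")
    case True then show ?thesis by simp
  next
    case False
    then obtain k0 where "k0 \<in> K" by auto
    then have mu0: "\<mu> \<ge> 0" using a by (meson norm_ge_zero order_trans)
    have 1: "cmod (\<Sum>k\<in>K. a k * fourier d g (sh k m)) \<le> \<mu> * (\<Sum>k\<in>K. G (sh k m))"
    proof -
      have "cmod (\<Sum>k\<in>K. a k * fourier d g (sh k m)) \<le> (\<Sum>k\<in>K. cmod (a k * fourier d g (sh k m)))"
        by (rule norm_sum)
      also have "\<dots> \<le> (\<Sum>k\<in>K. \<mu> * G (sh k m))"
        unfolding G_def norm_mult using a by (intro sum_mono mult_right_mono) auto
      finally show ?thesis by (simp add: sum_distrib_left)
    qed
    have 2: "(cmod (\<Sum>k\<in>K. a k * fourier d g (sh k m)))\<^sup>2 \<le> \<mu>\<^sup>2 * (\<Sum>k\<in>K. G (sh k m))\<^sup>2"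
      using power_mono[OF 1, of 2] by (simp add: power_mult_distrib)
    have 3: "(\<Sum>k\<in>K. G (sh k m))\<^sup>2 \<le> (\<Sum>k\<in>K. c * R k) * (\<Sum>k\<in>K. (G (sh k m))\<^sup>2 / (c * R k))"
      using c0 R1 by (intro wcs) (auto intro: mult_pos_pos less_le_trans[OF zero_less_one])
    have 4: "R m * ((G (sh k m))\<^sup>2 / (c * R k)) \<le> R (sh k m) * (G (sh k m))\<^sup>2" for k
    proof -
      have "R m \<le> c * R (sh k m) * R k"
        unfolding R_def c_def sh_def using b gam by (intro rw_shift) auto
      then have "R m / (c * R k) \<le> R (sh k m)"
        using c0 R1[of k] by (simp add: divide_le_eq mult_ac)
      then have "R m / (c * R k) * (G (sh k m))\<^sup>2 \<le> R (sh k m) * (G (sh k m))\<^sup>2"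
        by (intro mult_right_mono) auto
      then show ?thesis by simp
    qed
    have "R m * (cmod (\<Sum>k\<in>K. a k * fourier d g (sh k m)))\<^sup>2 \<le> R m * (\<mu>\<^sup>2 * ((\<Sum>k\<in>K. c * R k) * (\<Sum>k\<in>K. (G (sh k m))\<^sup>2 / (c * R k))))"
      using 2 3 R1[of m] by (intro mult_left_mono order_trans[OF 2] mult_left_mono[OF 3]) auto
    also have "\<dots> = \<mu>\<^sup>2 * (\<Sum>k\<in>K. c * R k) * (R m * (\<Sum>k\<in>K. (G (sh k m))\<^sup>2 / (c * R k)))"
      by (simp only: mult_ac)
    also have "\<dots> = \<mu>\<^sup>2 * (\<Sum>k\<in>K. c * R k) * (\<Sum>k\<in>K. R m * ((G (sh k m))\<^sup>2 / (c * R k)))"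
      by (simp only: sum_distrib_left[of "R m"])
    also have "\<dots> \<le> \<mu>\<^sup>2 * (\<Sum>k\<in>K. c * R k) * (\<Sum>k\<in>K. R (sh k m) * (G (sh k m))\<^sup>2)"
      using 4 c0 R1 by (intro mult_left_mono sum_mono sum_nonneg mult_nonneg_nonneg) (auto intro: less_imp_le order_trans[OF zero_le_one])
    finally show ?thesis by (simp add: sum_distrib_left)
  qed
  have inner: "(\<Sum>m\<in>F. R (sh k m) * (G (sh k m))\<^sup>2) \<le> (korobov_norm \<alpha> \<gamma> d g)\<^sup>2" if k: "k \<in> K" for k
  proof -
    have bij: "bij_betw (sh k) (Zd d) (Zd d)" unfolding sh_def using k K by (intro shift_bij) auto
    have inj: "inj_on (sh k) F" using bij_betw_imp_inj_on[OF bij] F inj_on_subset by blast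
    have "(\<Sum>m\<in>F. R (sh k m) * (G (sh k m))\<^sup>2) = (\<Sum>j\<in>sh k ` F. R j * (G j)\<^sup>2)"
      by (simp add: sum.reindex[OF inj])
    also have "\<dots> \<le> (\<Sum>j\<in>sh k ` F. rw \<alpha> \<gamma> d j * (G j)\<^sup>2)"
      unfolding R_def using b gam by (intro sum_mono mult_right_mono rw_mono) auto
    also have "\<dots> \<le> (korobov_norm \<alpha> \<gamma> d g)\<^sup>2"
      unfolding G_def using F bij_betw_imp_surj_on[OF bij] by (intro kor_fin_le[OF g]) auto
    finally show ?thesis .
  qed
  have "(\<Sum>m\<in>F. rw \<beta> \<gamma> d m * (cmod (\<Sum>k\<in>K. a k * fourier d g (\<lambda>i. m i + k i)))\<^sup>2)
     = (\<Sum>m\<in>F. R m * (cmod (\<Sum>k\<in>K. a k * fourier d g (sh k m)))\<^sup>2)"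
    unfolding R_def sh_def by simp
  also have "\<dots> \<le> (\<Sum>m\<in>F. \<mu>\<^sup>2 * (c * (\<Sum>k\<in>K. R k)) * (\<Sum>k\<in>K. R (sh k m) * (G (sh k m))\<^sup>2))"
    by (intro sum_mono per)
  also have "\<dots> = \<mu>\<^sup>2 * (c * (\<Sum>k\<in>K. R k)) * (\<Sum>k\<in>K. \<Sum>m\<in>F. R (sh k m) * (G (sh k m))\<^sup>2)"
    by (simp add: sum_distrib_left sum.swap[of _ F K])
  also have "\<dots> \<le> \<mu>\<^sup>2 * (c * (\<Sum>k\<in>K. R k)) * (\<Sum>k\<in>K. (korobov_norm \<alpha> \<gamma> d g)\<^sup>2)"
    using inner c0 R1 by (intro mult_left_mono sum_mono mult_nonneg_nonneg sum_nonneg) (auto intro: less_imp_le order_trans[OF zero_le_one])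
  also have "\<dots> = \<mu>\<^sup>2 * (c * (\<Sum>k\<in>K. R k)) * (real (card K) * (korobov_norm \<alpha> \<gamma> d g)\<^sup>2)"
    by simp
  finally show ?thesis unfolding c_def R_def .
qed

lemma phi_check_bound: "cmod (phi_check d N xs c k) \<le> mu_bar N c"
proof -
  have "cmod (phi_check d N xs c k) = (1 / real N) * cmod (\<Sum>n<N. complex_of_real (c n) * omega d k (xs n))"
    unfolding phi_check_def by (simp add: norm_mult norm_divide)
  also have "\<dots> \<le> (1 / real N) * (\<Sum>n<N. \<bar>c n\<bar>)"
    by (intro mult_left_mono order_trans[OF norm_sum] sum_mono) (auto simp: norm_mult)
  finally show ?thesis unfolding mu_bar_def .
qed

lemma mu_bar_nonneg: "mu_bar N c \<ge> 0" unfolding mu_bar_def by (auto intro: sum_nonneg)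

lemma prod_kor:
  assumes g: "g \<in> korobov \<alpha> \<gamma> d" and b: "0 \<le> \<beta>" "\<beta> \<le> \<alpha>" and gam: "\<forall>j<d. 0 < \<gamma> j"
    and K: "finite K" "K \<subseteq> Zd d"
  shows "(\<lambda>x. g x * phi_K d K N xs c x) \<in> korobov \<beta> \<gamma> d"
    and "korobov_norm \<beta> \<gamma> d (\<lambda>x. g x * phi_K d K N xs c x) \<le>
      sqrt ((mu_bar N c)\<^sup>2 * ((2 powr (2*\<beta>))^d * (\<Sum>k\<in>K. rw \<beta> \<gamma> d k)) * (real (card K) * (korobov_norm \<alpha> \<gamma> d g)\<^sup>2))"
proof -
  let ?h = "\<lambda>x. g x * phi_K d K N xs c x"
  let ?B = "(mu_bar N c)\<^sup>2 * ((2 powr (2*\<beta>))^d * (\<Sum>k\<in>K. rw \<beta> \<gamma> d k)) * (real (card K) * (korobov_norm \<alpha> \<gamma> d g)\<^sup>2)"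
  have fh: "fourier d ?h m = (\<Sum>k\<in>K. phi_check d N xs c k * fourier d g (\<lambda>i. m i + k i))" for m
    by (rule fourier_prod[OF g K(1)])
  have m: "?h \<in> borel_measurable (cube_measure d)"
    by (intro borel_measurable_times kor_meas[OF g] phi_meas)
  define B where "B = (\<Sum>k\<in>K. cmod (phi_check d N xs c k))"
  have i: "integrable (cube_measure d) (\<lambda>x. (cmod (?h x))\<^sup>2)"
  proof (rule Bochner_Integration.integrable_bound)
    show "integrable (cube_measure d) (\<lambda>x. B\<^sup>2 * (cmod (g x))\<^sup>2)"
      using g unfolding korobov_def by auto
    show "(\<lambda>x. (cmod (?h x))\<^sup>2) \<in> borel_measurable (cube_measure d)"
      by (rule sqnorm_meas[OF m])
    show "AE x in cube_measure d. norm ((cmod (?h x))\<^sup>2) \<le> norm (B\<^sup>2 * (cmod (g x))\<^sup>2)"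
    proof (rule AE_I2)
      fix x
      have "cmod (?h x) \<le> cmod (g x) * B"
        unfolding norm_mult B_def by (intro mult_left_mono phi_bound) auto
      then have "(cmod (?h x))\<^sup>2 \<le> (cmod (g x) * B)\<^sup>2" by (intro power_mono) auto
      then show "norm ((cmod (?h x))\<^sup>2) \<le> norm (B\<^sup>2 * (cmod (g x))\<^sup>2)"
        by (simp add: power_mult_distrib mult.commute)
    qed
  qed
  have fin: "(\<Sum>m\<in>F. rw \<beta> \<gamma> d m * (cmod (fourier d ?h m))\<^sup>2) \<le> ?B" if F: "finite F" "F \<subseteq> Zd d" for F
    unfolding fh using g b gam K F phi_check_bound by (intro h_norm_fin) auto
  have nn: "0 \<le> rw \<beta> \<gamma> d m * (cmod (fourier d ?h m))\<^sup>2" for m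
    by (intro mult_nonneg_nonneg order_trans[OF zero_le_one rw_pos]) auto
  have su: "(\<lambda>m. rw \<beta> \<gamma> d m * (cmod (fourier d ?h m))\<^sup>2) summable_on Zd d"
    by (rule nonneg_bdd_above_summable_on) (use nn fin in \<open>auto intro!: bdd_aboveI2\<close>)
  have hs: "((\<lambda>m. fourier d ?h m * omega d m x) has_sum ?h x) (Zd d)" if x: "x \<in> cube d" for x
    unfolding fh by (rule h_hassum[OF g K x])
  show "?h \<in> korobov \<beta> \<gamma> d" unfolding korobov_def using m i su hs by auto
  have "(\<Sum>\<^sub>\<infinity>m\<in>Zd d. rw \<beta> \<gamma> d m * (cmod (fourier d ?h m))\<^sup>2) \<le> ?B"
    using su fin by (intro infsum_le_finite_sums) auto
  then show "korobov_norm \<beta> \<gamma> d ?h \<le> sqrt ?B"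
    unfolding korobov_norm_def by (rule real_sqrt_le_mono)
qed

lemma lattice_in_cube: "lattice_pt d L gen l \<in> cube d"
  unfolding lattice_pt_def cube_def
  by (auto simp: restrict_PiE_iff frac_lt_1 less_imp_le)

lemma kor_pointwise:
  assumes f: "f \<in> korobov s \<gamma> d" and s: "s > 1/2" and g: "\<forall>j<d. 0 < \<gamma> j \<and> \<gamma> j \<le> 1" and x: "x \<in> cube d"
  shows "cmod (f x) \<le> sqrt (S1 s ^ d) * korobov_norm s \<gamma> d f"
proof (rule has_sum_norm_bound[OF kor_hassum[OF f x]])
  fix F assume F: "finite F" "F \<subseteq> Zd d"
  have "(\<Sum>k\<in>F. cmod (fourier d f k * omega d k x)) = (\<Sum>k\<in>F. cmod (fourier d f k))"
    by (simp add: norm_mult)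
  also have "\<dots> \<le> sqrt (\<Sum>k\<in>F. 1 / rw s \<gamma> d k) * korobov_norm s \<gamma> d f"
    by (rule kor_abs_fin[OF f F])
  also have "\<dots> \<le> sqrt (S1 s ^ d) * korobov_norm s \<gamma> d f"
    using s g F kor_norm_nonneg by (intro mult_right_mono real_sqrt_le_mono sum_inv_rw) auto
  finally show "(\<Sum>k\<in>F. cmod (fourier d f k * omega d k x)) \<le> sqrt (S1 s ^ d) * korobov_norm s \<gamma> d f" .
qed

lemma kor_coef0:
  assumes f: "f \<in> korobov s \<gamma> d" and s: "s > 1/2" and g: "\<forall>j<d. 0 < \<gamma> j \<and> \<gamma> j \<le> 1"
  shows "cmod (integral\<^sup>L (cube_measure d) f) \<le> sqrt (S1 s ^ d) * korobov_norm s \<gamma> d f"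
proof -
  have z: "(\<lambda>_. 0::int) \<in> Zd d" unfolding Zd_def by simp
  have "cmod (integral\<^sup>L (cube_measure d) f) = (\<Sum>k\<in>{\<lambda>_. 0}. cmod (fourier d f k))"
    by (simp add: int_fourier0)
  also have "\<dots> \<le> sqrt (\<Sum>k\<in>{\<lambda>_. 0}. 1 / rw s \<gamma> d k) * korobov_norm s \<gamma> d f"
    using z by (intro kor_abs_fin[OF f]) auto
  also have "\<dots> \<le> sqrt (S1 s ^ d) * korobov_norm s \<gamma> d f"
    using s g z kor_norm_nonneg by (intro mult_right_mono real_sqrt_le_mono sum_inv_rw) auto
  finally show ?thesis .
qed

lemma lattice_bound:
  assumes "L > 0" "\<And>l. cmod (f (lattice_pt d L gen l)) \<le> B"
  shows "cmod (lattice_rule d L gen f) \<le> B"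
proof -
  have "cmod (lattice_rule d L gen f) = (1 / real L) * cmod (\<Sum>l<L. f (lattice_pt d L gen l))"
    unfolding lattice_rule_def by (simp add: norm_mult norm_divide)
  also have "\<dots> \<le> (1 / real L) * (\<Sum>l<L. B)"
    by (intro mult_left_mono order_trans[OF norm_sum] sum_mono assms(2)) auto
  also have "\<dots> = B" using assms(1) by simp
  finally show ?thesis .
qed

lemma wce_bdd:
  assumes s: "s > 1/2" and g: "\<forall>j<d. 0 < \<gamma> j \<and> \<gamma> j \<le> 1" and L: "L > 0"
  shows "bdd_above {cmod (integral\<^sup>L (cube_measure d) f - lattice_rule d L gen f) | f.
      f \<in> korobov s \<gamma> d \<and> korobov_norm s \<gamma> d f \<le> 1}"
proof (rule bdd_aboveI[where M = "2 * sqrt (S1 s ^ d)"])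
  fix y assume "y \<in> {cmod (integral\<^sup>L (cube_measure d) f - lattice_rule d L gen f) | f.
      f \<in> korobov s \<gamma> d \<and> korobov_norm s \<gamma> d f \<le> 1}"
  then obtain f where y: "y = cmod (integral\<^sup>L (cube_measure d) f - lattice_rule d L gen f)"
    and f: "f \<in> korobov s \<gamma> d \<and> korobov_norm s \<gamma> d f \<le> 1" by auto
  let ?B = "sqrt (S1 s ^ d)"
  have B0: "?B \<ge> 0" using S1_ge1[OF s] by simp
  have "cmod (integral\<^sup>L (cube_measure d) f) \<le> ?B * korobov_norm s \<gamma> d f"
    using f s g by (intro kor_coef0) auto
  also have "\<dots> \<le> ?B * 1" using f B0 by (intro mult_left_mono) auto
  finally have a: "cmod (integral\<^sup>L (cube_measure d) f) \<le> ?B" by simp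
  have "cmod (lattice_rule d L gen f) \<le> ?B"
  proof (rule lattice_bound[OF L])
    fix l
    have "cmod (f (lattice_pt d L gen l)) \<le> ?B * korobov_norm s \<gamma> d f"
      using f s g lattice_in_cube by (intro kor_pointwise) auto
    also have "\<dots> \<le> ?B * 1" using f B0 by (intro mult_left_mono) auto
    finally show "cmod (f (lattice_pt d L gen l)) \<le> ?B" by simp
  qed
  then show "y \<le> 2 * ?B"
    unfolding y using a norm_triangle_ineq4[of "integral\<^sup>L (cube_measure d) f" "lattice_rule d L gen f"] by linarith
qed

lemma err_scale:
  "cmod (integral\<^sup>L (cube_measure d) (\<lambda>x. z * f x) - lattice_rule d L gen (\<lambda>x. z * f x))
    = cmod z * cmod (integral\<^sup>L (cube_measure d) f - lattice_rule d L gen f)"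
proof -
  have "integral\<^sup>L (cube_measure d) (\<lambda>x. z * f x) - lattice_rule d L gen (\<lambda>x. z * f x)
     = z * (integral\<^sup>L (cube_measure d) f - lattice_rule d L gen f)"
    unfolding lattice_rule_def by (simp add: sum_distrib_left[symmetric] algebra_simps)
  then show ?thesis by (simp add: norm_mult)
qed

lemma aux_div:
  fixes a b n w :: real
  assumes "a = (1 / n) * b" "a \<le> w" "n > 0"
  shows "b \<le> n * w"
proof -
  have "b = n * a" using assms(1,3) by simp
  also have "\<dots> \<le> n * w" using assms(2,3) by (intro mult_left_mono) auto
  finally show ?thesis .
qed

lemma err_le_wce:
  assumes h: "h \<in> korobov s \<gamma> d" and s: "s > 1/2" and g: "\<forall>j<d. 0 < \<gamma> j \<and> \<gamma> j \<le> 1" and L: "L > 0"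
  shows "cmod (integral\<^sup>L (cube_measure d) h - lattice_rule d L gen h) \<le> korobov_norm s \<gamma> d h * wce s \<gamma> d L gen"
proof -
  let ?S = "{cmod (integral\<^sup>L (cube_measure d) f - lattice_rule d L gen f) | f.
      f \<in> korobov s \<gamma> d \<and> korobov_norm s \<gamma> d f \<le> 1}"
  have bdd: "bdd_above ?S" by (rule wce_bdd[OF s g L])
  have W0: "0 \<le> wce s \<gamma> d L gen"
  proof -
    have "(\<lambda>x. 0 * h x) \<in> korobov s \<gamma> d" "korobov_norm s \<gamma> d (\<lambda>x. 0 * h x) = 0"
      using kor_scale[OF h, of 0] by auto
    then have "cmod (integral\<^sup>L (cube_measure d) (\<lambda>x. 0 * h x) - lattice_rule d L gen (\<lambda>x. 0 * h x)) \<in> ?S"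
      by force
    then have "cmod (integral\<^sup>L (cube_measure d) (\<lambda>x. 0 * h x) - lattice_rule d L gen (\<lambda>x. 0 * h x)) \<le> wce s \<gamma> d L gen"
      unfolding wce_def by (rule cSup_upper[OF _ bdd])
    then show ?thesis using err_scale[where z=0 and f=h] by simp
  qed
  let ?n = "korobov_norm s \<gamma> d h"
  show ?thesis
  proof (cases "?n = 0")
    case True
    have "(\<Sum>\<^sub>\<infinity>k\<in>Zd d. rw s \<gamma> d k * (cmod (fourier d h k))\<^sup>2) = 0"
      using True kor_norm_sq[OF h] by simp
    then have z: "rw s \<gamma> d k * (cmod (fourier d h k))\<^sup>2 = 0" if "k \<in> Zd d" for k
      using that kor_summable[OF h]
      by (intro nonneg_infsum_le_0D[of _ "Zd d"]) (auto intro!: mult_nonneg_nonneg order_trans[OF zero_le_one rw_pos])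
    have f0: "fourier d h k = 0" if "k \<in> Zd d" for k
      using z[OF that] rw_pos[of s \<gamma> d k] by auto
    have hx: "h x = 0" if x: "x \<in> cube d" for x
    proof -
      have "((\<lambda>k. fourier d h k * omega d k x) has_sum h x) (Zd d)" by (rule kor_hassum[OF h x])
      moreover have "((\<lambda>k. fourier d h k * omega d k x) has_sum 0) (Zd d)"
        by (rule has_sum_0) (simp add: f0)
      ultimately show ?thesis by (rule has_sum_unique)
    qed
    have z0: "(\<lambda>_. 0::int) \<in> Zd d" unfolding Zd_def by simp
    have "integral\<^sup>L (cube_measure d) h = 0" using f0[OF z0] by (simp add: int_fourier0)
    moreover have "lattice_rule d L gen h = 0"
      unfolding lattice_rule_def using hx lattice_in_cube by simp
    ultimately show ?thesis using True by simp
  next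
    case False
    then have n0: "?n > 0" using kor_norm_nonneg[of s \<gamma> d h] by linarith
    let ?f = "\<lambda>x. complex_of_real (1 / ?n) * h x"
    have fk: "?f \<in> korobov s \<gamma> d" by (rule kor_scale(1)[OF h])
    have cm: "cmod (complex_of_real (1 / ?n)) = 1 / ?n" by (subst norm_of_real) (use n0 in simp)
    have fn: "korobov_norm s \<gamma> d ?f = 1" using kor_scale(2)[OF h, of "complex_of_real (1 / ?n)", unfolded cm] n0 by simp
    have "cmod (integral\<^sup>L (cube_measure d) ?f - lattice_rule d L gen ?f) \<in> ?S"
      using fk fn by force
    then have le: "cmod (integral\<^sup>L (cube_measure d) ?f - lattice_rule d L gen ?f) \<le> wce s \<gamma> d L gen"
      unfolding wce_def by (rule cSup_upper[OF _ bdd])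
    have "cmod (integral\<^sup>L (cube_measure d) ?f - lattice_rule d L gen ?f)
       = (1 / ?n) * cmod (integral\<^sup>L (cube_measure d) h - lattice_rule d L gen h)"
      using err_scale[where z="complex_of_real (1 / ?n)" and f=h and d=d and L=L and gen=gen, unfolded cm] by simp
    then show ?thesis by (rule aux_div[OF _ le n0])
  qed
qed

lemma Rset_sub:
  assumes a: "\<alpha> > 0" and g: "\<forall>j<d. 0 < \<gamma> j \<and> \<gamma> j \<le> 1" and nu: "\<nu> > 1"
  shows "Rset \<alpha> \<nu> \<gamma> d \<subseteq> ibox d (\<lambda>_. {-\<lfloor>\<nu> powr (1/(2*\<alpha>))\<rfloor>..\<lfloor>\<nu> powr (1/(2*\<alpha>))\<rfloor>})"
proof
  fix k assume k: "k \<in> Rset \<alpha> \<nu> \<gamma> d"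
  let ?u = "\<nu> powr (1/(2*\<alpha>))"
  have bnd: "\<bar>k j\<bar> \<le> \<lfloor>?u\<rfloor>" if j: "j < d" for j
  proof -
    have r: "r1 \<alpha> (\<gamma> j) (k j) \<le> \<nu>" using k j unfolding Rset_def by auto
    have "real_of_int \<bar>k j\<bar> powr (2*\<alpha>) / \<gamma> j \<le> \<nu>" using r unfolding r1_def by simp
    then have "real_of_int \<bar>k j\<bar> powr (2*\<alpha>) \<le> \<nu> * \<gamma> j" using g j by (simp add: divide_le_eq)
    also have "\<dots> \<le> \<nu>" using g j nu by (simp add: mult_left_le_one_le)
    finally have "(real_of_int \<bar>k j\<bar> powr (2*\<alpha>)) powr (1/(2*\<alpha>)) \<le> ?u"
      using a by (intro powr_mono2) auto
    then have "real_of_int \<bar>k j\<bar> \<le> ?u" using a by (simp add: powr_powr)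
    then show ?thesis by (simp add: le_floor_iff)
  qed
  have "\<forall>j<d. k j \<in> {-\<lfloor>?u\<rfloor>..\<lfloor>?u\<rfloor>}"
  proof (intro allI impI)
    fix j assume "j < d"
    from bnd[OF this] show "k j \<in> {-\<lfloor>?u\<rfloor>..\<lfloor>?u\<rfloor>}" by (simp add: abs_le_iff)
  qed
  then show "k \<in> ibox d (\<lambda>_. {-\<lfloor>?u\<rfloor>..\<lfloor>?u\<rfloor>})"
    using k unfolding ibox_def Rset_def Zd_def by blast
qed

lemma Rset_finite:
  assumes a: "\<alpha> > 0" and g: "\<forall>j<d. 0 < \<gamma> j \<and> \<gamma> j \<le> 1" and nu: "\<nu> > 1"
  shows "finite (Rset \<alpha> \<nu> \<gamma> d)"
  by (rule finite_subset[OF Rset_sub[OF a g nu]]) (rule ibox_finite, simp)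

lemma Rset_Zd: "Rset \<alpha> \<nu> \<gamma> d \<subseteq> Zd d" unfolding Rset_def by auto

lemma Rset_card:
  assumes a: "\<alpha> > 0" and g: "\<forall>j<d. 0 < \<gamma> j \<and> \<gamma> j \<le> 1" and nu: "\<nu> > 1"
  shows "real (card (Rset \<alpha> \<nu> \<gamma> d)) \<le> (3 * \<nu> powr (1/(2*\<alpha>)))^d"
proof -
  let ?u = "\<nu> powr (1/(2*\<alpha>))"
  have u1: "?u \<ge> 1" using a nu by (intro ge_one_powr_ge_zero) auto
  have "card (Rset \<alpha> \<nu> \<gamma> d) \<le> card (ibox d (\<lambda>_. {-\<lfloor>?u\<rfloor>..\<lfloor>?u\<rfloor>}))"
    by (intro card_mono Rset_sub[OF a g nu] ibox_finite) simp
  also have "\<dots> = (nat (2 * \<lfloor>?u\<rfloor> + 1))^d" by (subst ibox_card) auto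
  finally have "real (card (Rset \<alpha> \<nu> \<gamma> d)) \<le> real ((nat (2 * \<lfloor>?u\<rfloor> + 1))^d)" by linarith
  also have "\<dots> = (of_int (2 * \<lfloor>?u\<rfloor> + 1))^d" using u1 by (simp add: of_nat_power)
  also have "\<dots> \<le> (3 * ?u)^d"
  proof (rule power_mono)
    have "of_int \<lfloor>?u\<rfloor> \<le> ?u" by simp
    then show "real_of_int (2 * \<lfloor>?u\<rfloor> + 1) \<le> 3 * ?u" using u1 by linarith
    show "0 \<le> real_of_int (2 * \<lfloor>?u\<rfloor> + 1)" using u1 by simp
  qed
  finally show ?thesis .
qed

lemma r1_beta_K:
  assumes b: "0 < \<beta>" "\<beta> \<le> \<alpha>" and g: "0 < \<gamma>" "\<gamma> \<le> 1" and nu: "\<nu> > 1" and r: "r1 \<alpha> \<gamma> h \<le> \<nu>"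
  shows "r1 \<beta> \<gamma> h \<le> \<nu> powr (\<beta>/\<alpha>) / \<gamma>"
proof -
  have nb: "\<nu> powr (\<beta>/\<alpha>) \<ge> 1" using b nu by (intro ge_one_powr_ge_zero) auto
  have one: "1 \<le> \<nu> powr (\<beta>/\<alpha>) / \<gamma>" using nb g by (simp add: le_divide_eq)
  have "real_of_int \<bar>h\<bar> powr (2*\<alpha>) / \<gamma> \<le> \<nu>" using r unfolding r1_def by simp
  then have "real_of_int \<bar>h\<bar> powr (2*\<alpha>) \<le> \<nu> * \<gamma>" using g by (simp add: divide_le_eq)
  also have "\<dots> \<le> \<nu>" using g nu by (simp add: mult_left_le_one_le)
  finally have "(real_of_int \<bar>h\<bar> powr (2*\<alpha>)) powr (\<beta>/\<alpha>) \<le> \<nu> powr (\<beta>/\<alpha>)"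
    using b by (intro powr_mono2) auto
  then have "real_of_int \<bar>h\<bar> powr (2*\<beta>) \<le> \<nu> powr (\<beta>/\<alpha>)"
    using b by (simp add: powr_powr)
  then have "real_of_int \<bar>h\<bar> powr (2*\<beta>) / \<gamma> \<le> \<nu> powr (\<beta>/\<alpha>) / \<gamma>"
    using g by (simp add: divide_right_mono)
  then show ?thesis unfolding r1_def using one by simp
qed

lemma rw_beta_K:
  assumes b: "0 < \<beta>" "\<beta> \<le> \<alpha>" and g: "\<forall>j<d. 0 < \<gamma> j \<and> \<gamma> j \<le> 1" and nu: "\<nu> > 1"
    and k: "k \<in> Rset \<alpha> \<nu> \<gamma> d"
  shows "rw \<beta> \<gamma> d k \<le> (\<nu> powr (\<beta>/\<alpha>))^d / (\<Prod>j<d. \<gamma> j)"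
proof -
  have "rw \<beta> \<gamma> d k \<le> (\<Prod>j<d. \<nu> powr (\<beta>/\<alpha>) / \<gamma> j)"
    unfolding rw_def using k b g nu
    by (intro prod_mono conjI order_trans[OF zero_le_one r1_ge1] r1_beta_K[of \<beta> \<alpha>]) (auto simp: Rset_def)
  also have "\<dots> = (\<nu> powr (\<beta>/\<alpha>))^d / (\<Prod>j<d. \<gamma> j)" by (simp add: prod_dividef)
  finally show ?thesis .
qed

lemma rzeta_nonneg:
  assumes "s > 1" shows "rzeta s \<ge> 0"
proof -
  have "summable (\<lambda>n. real n powr (-s))" using assms by (subst summable_real_powr_iff) auto
  then have "summable (\<lambda>n. real (Suc n) powr (-s))" by (subst summable_Suc_iff)
  then have "summable (\<lambda>n. 1 / real (Suc n) powr s)" by (simp add: powr_minus_divide)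
  then show ?thesis unfolding rzeta_def by (intro suminf_nonneg) auto
qed

lemma zeta_dd_ge1: "\<delta> > 0 \<Longrightarrow> zeta_dd \<delta> d \<ge> 1"
  unfolding zeta_dd_def using rzeta_nonneg[of "1 + 2*\<delta>"] by (intro ge_one_powr_ge_zero) auto

lemma c_agd_ge1: "c_agd \<alpha> \<gamma> d \<ge> 1"
  unfolding c_agd_def by (simp add: prod_ge_1)

lemma Cgd_nonneg: "Cgd \<gamma> d \<beta> \<tau> \<ge> 0"
  unfolding Cgd_def by (intro mult_nonneg_nonneg prod_nonneg) auto

lemma nh_arith:
  fixes nh mu G c SR k X Gam Kb Y V c' :: real
  assumes h: "nh \<le> sqrt (mu\<^sup>2 * (c * SR) * (k * G\<^sup>2))"
    and "0 \<le> c" "c \<le> c'" "0 \<le> SR" "SR \<le> k * (X / Gam)" "0 \<le> k" "k \<le> Kb" "0 < Gam" "0 \<le> X"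
    "Kb * Kb * X \<le> Y * V\<^sup>2" "0 \<le> mu" "0 \<le> G" "0 \<le> V" "0 \<le> Y"
  shows "nh \<le> sqrt (c' * Y / Gam) * (mu * G * V)"
proof -
  have c'0: "0 \<le> c'" using assms by linarith
  have a: "SR * k \<le> (k * (X / Gam)) * k" using assms by (intro mult_right_mono) auto
  have b: "(k * (X / Gam)) * k = (k * k * X) / Gam" by simp
  have c: "k * k * X \<le> Kb * Kb * X" using assms by (intro mult_right_mono mult_mono) auto
  have "SR * k \<le> (Kb * Kb * X) / Gam" using a b c assms by (metis divide_right_mono less_imp_le order_trans)
  also have "\<dots> \<le> Y * V\<^sup>2 / Gam" using assms by (intro divide_right_mono) auto
  finally have d: "SR * k \<le> Y * V\<^sup>2 / Gam" .
  have e: "c * (SR * k) \<le> c' * (Y * V\<^sup>2 / Gam)"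
    using assms c'0 d by (intro mult_mono) auto
  have f: "mu\<^sup>2 * (c * SR) * (k * G\<^sup>2) = (mu * G)\<^sup>2 * (c * (SR * k))"
    by (simp add: power_mult_distrib mult_ac)
  have g: "(mu * G)\<^sup>2 * (c * (SR * k)) \<le> (mu * G)\<^sup>2 * (c' * (Y * V\<^sup>2 / Gam))"
    using e by (intro mult_left_mono) auto
  have hh: "(mu * G)\<^sup>2 * (c' * (Y * V\<^sup>2 / Gam)) = (c' * Y / Gam) * (mu * G * V)\<^sup>2"
    by (simp add: power_mult_distrib mult_ac)
  have "nh \<le> sqrt ((c' * Y / Gam) * (mu * G * V)\<^sup>2)"
    using h f g hh by (metis order_trans real_sqrt_le_mono)
  also have "\<dots> = sqrt (c' * Y / Gam) * sqrt ((mu * G * V)\<^sup>2)"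
    by (rule real_sqrt_mult)
  also have "sqrt ((mu * G * V)\<^sup>2) = mu * G * V"
    using assms by simp
  finally show ?thesis .
qed

lemma fin_arith:
  fixes e1 e2 C1 C2 G A mu V P Ca Z Cg nh W :: real
  assumes e1: "e1 \<le> C1 * G * A * mu" and e2: "e2 \<le> nh * W" and W: "W \<le> Cg * (1 / P)"
    and nh: "nh \<le> C2 * (mu * G * V)" "0 \<le> nh"
    and nn: "0 \<le> C1" "0 \<le> C2" "0 \<le> G" "0 \<le> A" "0 \<le> mu" "0 \<le> V" "0 \<le> Cg" "0 < P" "1 \<le> Ca" "1 \<le> Z"
  shows "e1 + e2 \<le> (max C1 C2 + 1) * G * (A + V / P * Ca * Z * Cg) * mu"
proof -
  let ?C = "max C1 C2 + 1"
  have "e2 \<le> nh * (Cg * (1 / P))" using e2 W nh(2) by (meson mult_left_mono order_trans)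
  also have "\<dots> \<le> (C2 * (mu * G * V)) * (Cg * (1 / P))" using nh nn by (intro mult_right_mono) auto
  also have "\<dots> \<le> (?C * (mu * G * V)) * (Cg * (1 / P))" using nn by (intro mult_right_mono) auto
  also have "\<dots> = ?C * G * (V / P * Cg) * mu" by simp
  also have "\<dots> \<le> ?C * G * (V / P * Ca * Z * Cg) * mu"
  proof -
    have CZ: "1 * 1 \<le> Ca * Z" using nn by (intro mult_mono) auto
    have "V / P * Cg * 1 \<le> V / P * Cg * (Ca * Z)"
      using nn CZ by (intro mult_left_mono) auto
    have eq: "V / P * Ca * Z * Cg = V / P * Cg * (Ca * Z)" by (simp only: mult_ac)
    have "V / P * Cg \<le> V / P * Ca * Z * Cg" unfolding eq using \<open>V / P * Cg * 1 \<le> V / P * Cg * (Ca * Z)\<close>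
      by (simp only: mult_1_right)
    moreover have "0 \<le> ?C * G" using nn by auto
    ultimately show ?thesis using nn by (intro mult_right_mono[OF mult_left_mono]) auto
  qed
  finally have e2': "e2 \<le> ?C * G * (V / P * Ca * Z * Cg) * mu" .
  have "e1 \<le> C1 * (G * A * mu)" using e1 by (simp add: mult_ac)
  also have "\<dots> \<le> ?C * (G * A * mu)" using nn by (intro mult_right_mono) auto
  finally have e1': "e1 \<le> ?C * G * A * mu" by (simp add: mult_ac)
  have "e1 + e2 \<le> ?C * G * A * mu + ?C * G * (V / P * Ca * Z * Cg) * mu" using e1' e2' by linarith
  also have "\<dots> = ?C * G * (A + V / P * Ca * Z * Cg) * mu" by (simp add: algebra_simps)
  finally show ?thesis .
qed

lemma err1_bound:
  assumes a: "\<alpha> > 1" and g: "\<forall>j<d. 0 < \<gamma> j \<and> \<gamma> j \<le> 1" and nu: "\<nu> > 1"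
    and gk: "g \<in> korobov \<alpha> \<gamma> d" and xs: "\<forall>n<N. xs n \<in> cube d"
  shows "err1 d (Rset \<alpha> \<nu> \<gamma> d) g N xs c \<le>
    sqrt (real d * (S1 \<alpha> ^ d * (2 * (2*\<alpha> / (2*\<alpha>-1))))) * korobov_norm \<alpha> \<gamma> d g
      * (1 / \<nu> powr (1/2 - 1/(4*\<alpha>))) * mu_bar N c"
proof -
  define K where "K = Rset \<alpha> \<nu> \<gamma> d"
  have Kf: "finite K" "K \<subseteq> Zd d" unfolding K_def using Rset_finite[where \<alpha>=\<alpha> and \<gamma>=\<gamma> and d=d and \<nu>=\<nu>] a g nu Rset_Zd by auto
  define B where "B = sqrt (real d * (S1 \<alpha> ^ d * T1 \<alpha> \<nu>)) * korobov_norm \<alpha> \<gamma> d g"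
  have int: "integral\<^sup>L (cube_measure d) (\<lambda>x. g x * phi_K d K N xs c x) = (\<Sum>k\<in>K. phi_check d N xs c k * fourier d g k)"
    by (simp add: int_fourier0 fourier_prod[OF gk Kf(1)])
  have swap: "(\<Sum>k\<in>K. phi_check d N xs c k * fourier d g k) =
     (1 / of_nat N) * (\<Sum>n<N. complex_of_real (c n) * (\<Sum>k\<in>K. fourier d g k * omega d k (xs n)))"
  proof -
    have "(\<Sum>k\<in>K. phi_check d N xs c k * fourier d g k) =
       (\<Sum>k\<in>K. (1 / of_nat N) * (\<Sum>n<N. complex_of_real (c n) * (fourier d g k * omega d k (xs n))))"
      unfolding phi_check_def by (intro sum.cong refl) (simp add: sum_distrib_left sum_distrib_right mult_ac)
    also have "\<dots> = (1 / of_nat N) * (\<Sum>k\<in>K. \<Sum>n<N. complex_of_real (c n) * (fourier d g k * omega d k (xs n)))"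
      by (simp add: sum_distrib_left)
    also have "(\<Sum>k\<in>K. \<Sum>n<N. complex_of_real (c n) * (fourier d g k * omega d k (xs n)))
        = (\<Sum>n<N. complex_of_real (c n) * (\<Sum>k\<in>K. fourier d g k * omega d k (xs n)))"
      by (subst sum.swap) (simp add: sum_distrib_left)
    finally show ?thesis .
  qed
  have v: "cmod (g (xs n) - (\<Sum>k\<in>K. fourier d g k * omega d k (xs n))) \<le> B" if n: "n < N" for n
  proof -
    have x: "xs n \<in> cube d" using xs n by auto
    have "((\<lambda>k. fourier d g k * omega d k (xs n)) has_sum (g (xs n) - (\<Sum>k\<in>K. fourier d g k * omega d k (xs n)))) (Zd d - K)"
      by (rule has_sum_Diff[OF kor_hassum[OF gk x] has_sum_finiteI[OF Kf(1) refl] Kf(2)])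
    then show ?thesis
    proof (rule has_sum_norm_bound)
      fix F assume F: "finite F" "F \<subseteq> Zd d - K"
      have "(\<Sum>k\<in>F. cmod (fourier d g k * omega d k (xs n))) = (\<Sum>k\<in>F. cmod (fourier d g k))"
        by (simp add: norm_mult)
      also have "\<dots> \<le> sqrt (\<Sum>k\<in>F. 1 / rw \<alpha> \<gamma> d k) * korobov_norm \<alpha> \<gamma> d g"
        using F by (intro kor_abs_fin[OF gk]) auto
      also have "\<dots> \<le> B" unfolding B_def using kor_norm_nonneg F a g nu
        by (intro mult_right_mono real_sqrt_le_mono tail_inv_rw) (auto simp: K_def)
      finally show "(\<Sum>k\<in>F. cmod (fourier d g k * omega d k (xs n))) \<le> B" .
    qed
  qed
  have "err1 d K g N xs c = cmod ((1 / of_nat N) *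
      (\<Sum>n<N. complex_of_real (c n) * (g (xs n) - (\<Sum>k\<in>K. fourier d g k * omega d k (xs n)))))"
    unfolding err1_def int swap by (simp add: sum_subtractf right_diff_distrib)
  also have "\<dots> = (1 / real N) * cmod (\<Sum>n<N. complex_of_real (c n) * (g (xs n) - (\<Sum>k\<in>K. fourier d g k * omega d k (xs n))))"
    by (simp add: norm_mult norm_divide)
  also have "\<dots> \<le> (1 / real N) * (\<Sum>n<N. \<bar>c n\<bar> * B)"
    by (intro mult_left_mono order_trans[OF norm_sum] sum_mono) (auto simp: norm_mult intro!: mult_left_mono v)
  also have "\<dots> = mu_bar N c * B" unfolding mu_bar_def by (simp add: sum_distrib_right)
  also have "B = sqrt (real d * (S1 \<alpha> ^ d * (2 * (2*\<alpha> / (2*\<alpha>-1))))) * korobov_norm \<alpha> \<gamma> d g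
      * (1 / \<nu> powr (1/2 - 1/(4*\<alpha>)))"
  proof -
    have e: "real d * (S1 \<alpha> ^ d * T1 \<alpha> \<nu>) = real d * (S1 \<alpha> ^ d * (2 * (2*\<alpha> / (2*\<alpha>-1)))) * \<nu> powr (1/(2*\<alpha>) - 1)"
      unfolding T1_def by (simp add: mult_ac)
    have s: "sqrt (\<nu> powr (1/(2*\<alpha>) - 1)) = \<nu> powr ((1/(2*\<alpha>) - 1) / 2)"
      using nu by (subst powr_half_sqrt_powr) auto
    have ex: "(1/(2*\<alpha>) - 1) / 2 = - (1/2 - 1/(4*\<alpha>))" using a by (simp add: field_simps)
    have "sqrt (\<nu> powr (1/(2*\<alpha>) - 1)) = \<nu> powr (- (1/2 - 1/(4*\<alpha>)))"
      using s[unfolded ex] .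
    also have "\<dots> = 1 / \<nu> powr (1/2 - 1/(4*\<alpha>))" by (rule powr_minus_divide)
    finally have sq: "sqrt (\<nu> powr (1/(2*\<alpha>) - 1)) = 1 / \<nu> powr (1/2 - 1/(4*\<alpha>))" .
    have "B = sqrt (real d * (S1 \<alpha> ^ d * (2 * (2*\<alpha> / (2*\<alpha>-1)))) * \<nu> powr (1/(2*\<alpha>) - 1)) * korobov_norm \<alpha> \<gamma> d g"
      unfolding B_def e ..
    also have "sqrt (real d * (S1 \<alpha> ^ d * (2 * (2*\<alpha> / (2*\<alpha>-1)))) * \<nu> powr (1/(2*\<alpha>) - 1))
       = sqrt (real d * (S1 \<alpha> ^ d * (2 * (2*\<alpha> / (2*\<alpha>-1))))) * sqrt (\<nu> powr (1/(2*\<alpha>) - 1))"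
      by (rule real_sqrt_mult)
    finally show ?thesis unfolding sq by (simp only: mult_ac)
  qed
  finally show ?thesis unfolding K_def by (simp add: mult_ac)
qed

theorem theorem3p15:
  fixes \<alpha> :: real and d :: nat and \<gamma> :: "nat \<Rightarrow> real"
  assumes "\<alpha> > 1"
    and "\<forall>j<d. 0 < \<gamma> j \<and> \<gamma> j \<le> 1"
    and "\<forall>i j. i \<le> j \<and> j < d \<longrightarrow> \<gamma> j \<le> \<gamma> i"
  shows "\<exists>C>0. \<forall>\<delta> \<tau> g N xs c L gen \<nu>.
     0 < \<delta> \<and> \<delta> < \<alpha> - 1 \<and> 0 < \<tau> \<and> \<tau> \<le> \<alpha> - 1 - \<delta> \<and>
     g \<in> korobov \<alpha> \<gamma> d \<and>
     0 < N \<and> (\<forall>n<N. xs n \<in> cube d) \<and>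
     prime L \<and> (\<forall>j<d. 1 \<le> gen j \<and> gen j \<le> L - 1) \<and>
     (\<forall>\<tau>'. 0 < \<tau>' \<and> \<tau>' \<le> (\<alpha> - 1/2 - \<delta>) - 1/2 \<longrightarrow>
        wce (\<alpha> - 1/2 - \<delta>) \<gamma> d L gen
          \<le> Cgd \<gamma> d (\<alpha> - 1/2 - \<delta>) \<tau>' * real L powr (- (\<alpha> - 1/2 - \<delta>) + \<tau>')) \<and>
     1 < \<nu>
     \<longrightarrow>
     err1 d (Rset \<alpha> \<nu> \<gamma> d) g N xs c + err2 d (Rset \<alpha> \<nu> \<gamma> d) g N xs c L gen
       \<le> C * korobov_norm \<alpha> \<gamma> d g *
          (1 / \<nu> powr (1/2 - 1 / (4 * \<alpha>))
           + \<nu> powr ((1/2 + 1 / (4 * \<alpha>)) * real d) / real L powr (\<alpha> - 1/2 - \<delta> - \<tau>)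
             * c_agd \<alpha> \<gamma> d * zeta_dd \<delta> d * Cgd \<gamma> d (\<alpha> - 1/2 - \<delta>) \<tau>)
          * mu_bar N c"
proof -
  define C1 where "C1 = sqrt (real d * (S1 \<alpha> ^ d * (2 * (2*\<alpha> / (2*\<alpha>-1)))))"
  define Gam where "Gam = (\<Prod>j<d. \<gamma> j)"
  define C2 where "C2 = sqrt ((2 powr (2*\<alpha>)) ^ d * 9 ^ d / Gam)"
  have Gam0: "Gam > 0" unfolding Gam_def using assms(2) by (intro prod_pos) auto
  have S10: "S1 \<alpha> \<ge> 1" using S1_ge1[of \<alpha>] assms(1) by simp
  have C10: "C1 \<ge> 0" unfolding C1_def using S10 assms(1)
    by (intro real_sqrt_ge_zero mult_nonneg_nonneg zero_le_power divide_nonneg_nonneg) auto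
  have C20: "C2 \<ge> 0" unfolding C2_def using Gam0 by auto
  have gam': "\<forall>j<d. 0 < \<gamma> j" using assms(2) by auto
  show ?thesis
  proof (intro exI[of _ "max C1 C2 + 1"] conjI allI impI)
    show "max C1 C2 + 1 > 0" using C10 by linarith
    fix \<delta> \<tau> :: real and g :: "(nat \<Rightarrow> real) \<Rightarrow> complex" and N :: nat and xs :: "nat \<Rightarrow> nat \<Rightarrow> real"
      and c :: "nat \<Rightarrow> real" and L :: nat and gen :: "nat \<Rightarrow> nat" and \<nu> :: real
    assume H: "0 < \<delta> \<and> \<delta> < \<alpha> - 1 \<and> 0 < \<tau> \<and> \<tau> \<le> \<alpha> - 1 - \<delta> \<and>
     g \<in> korobov \<alpha> \<gamma> d \<and>
     0 < N \<and> (\<forall>n<N. xs n \<in> cube d) \<and>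
     prime L \<and> (\<forall>j<d. 1 \<le> gen j \<and> gen j \<le> L - 1) \<and>
     (\<forall>\<tau>'. 0 < \<tau>' \<and> \<tau>' \<le> (\<alpha> - 1/2 - \<delta>) - 1/2 \<longrightarrow>
        wce (\<alpha> - 1/2 - \<delta>) \<gamma> d L gen
          \<le> Cgd \<gamma> d (\<alpha> - 1/2 - \<delta>) \<tau>' * real L powr (- (\<alpha> - 1/2 - \<delta>) + \<tau>')) \<and>
     1 < \<nu>"
    define \<beta> where "\<beta> = \<alpha> - 1/2 - \<delta>"
    have d1: "0 < \<delta>" "\<delta> < \<alpha> - 1" and t1: "0 < \<tau>" "\<tau> \<le> \<alpha> - 1 - \<delta>"
      and gk: "g \<in> korobov \<alpha> \<gamma> d" and xs: "\<forall>n<N. xs n \<in> cube d" and Lp: "prime L"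
      and nu: "1 < \<nu>" using H by auto
    have hyp: "\<forall>\<tau>'. 0 < \<tau>' \<and> \<tau>' \<le> \<beta> - 1/2 \<longrightarrow>
        wce \<beta> \<gamma> d L gen \<le> Cgd \<gamma> d \<beta> \<tau>' * real L powr (- \<beta> + \<tau>')"
      using H unfolding \<beta>_def by auto
    have b: "0 < \<beta>" "\<beta> \<le> \<alpha>" "\<beta> > 1/2" using d1 assms(1) unfolding \<beta>_def by auto
    define K where "K = Rset \<alpha> \<nu> \<gamma> d"
    have Kf: "finite K" "K \<subseteq> Zd d" unfolding K_def using Rset_finite[where \<alpha>=\<alpha> and \<gamma>=\<gamma> and d=d and \<nu>=\<nu>] assms nu Rset_Zd by auto
    have L0: "L > 0" using Lp prime_gt_0_nat by blast
    let ?h = "\<lambda>x. g x * phi_K d K N xs c x"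
    have hk: "?h \<in> korobov \<beta> \<gamma> d" using prod_kor(1)[OF gk _ _ gam' Kf] b by auto
    have hn: "korobov_norm \<beta> \<gamma> d ?h \<le> sqrt ((mu_bar N c)\<^sup>2 * ((2 powr (2*\<beta>))^d * (\<Sum>k\<in>K. rw \<beta> \<gamma> d k)) * (real (card K) * (korobov_norm \<alpha> \<gamma> d g)\<^sup>2))"
      using prod_kor(2)[OF gk _ _ gam' Kf] b by auto
    have e2: "err2 d K g N xs c L gen \<le> korobov_norm \<beta> \<gamma> d ?h * wce \<beta> \<gamma> d L gen"
      unfolding err2_def by (rule err_le_wce[OF hk b(3) assms(2) L0])
    have W: "wce \<beta> \<gamma> d L gen \<le> Cgd \<gamma> d \<beta> \<tau> * (1 / real L powr (\<beta> - \<tau>))"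
    proof -
      have "wce \<beta> \<gamma> d L gen \<le> Cgd \<gamma> d \<beta> \<tau> * real L powr (- \<beta> + \<tau>)"
        using hyp t1 unfolding \<beta>_def by auto
      moreover have "real L powr (- \<beta> + \<tau>) = 1 / real L powr (\<beta> - \<tau>)"
        by (simp add: powr_minus_divide[symmetric])
      ultimately show ?thesis by simp
    qed
    define V where "V = \<nu> powr ((1/2 + 1/(4*\<alpha>)) * real d)"
    define u where "u = \<nu> powr (1/(2*\<alpha>))"
    have V0: "V \<ge> 0" unfolding V_def by simp
    have Vp: "V = (\<nu> powr (1/2 + 1/(4*\<alpha>)))^d"
      unfolding V_def using nu by (simp add: powr_powr[symmetric] powr_realpow)
    have nh: "korobov_norm \<beta> \<gamma> d ?h \<le> C2 * (mu_bar N c * korobov_norm \<alpha> \<gamma> d g * V)"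
      unfolding C2_def
    proof (rule nh_arith[OF hn])
      show "0 \<le> (2 powr (2*\<beta>))^d" by simp
      show "(2 powr (2*\<beta>))^d \<le> (2 powr (2*\<alpha>))^d"
        using b by (intro power_mono powr_mono) auto
      show "0 \<le> (\<Sum>k\<in>K. rw \<beta> \<gamma> d k)"
        by (intro sum_nonneg order_trans[OF zero_le_one rw_pos])
      show "(\<Sum>k\<in>K. rw \<beta> \<gamma> d k) \<le> real (card K) * ((\<nu> powr (\<beta>/\<alpha>))^d / Gam)"
        unfolding Gam_def using b assms(2) nu
        by (intro sum_bounded_above rw_beta_K) (auto simp: K_def)
      show "0 \<le> real (card K)" by simp
      show "real (card K) \<le> (3 * u)^d"
        unfolding K_def u_def using Rset_card[where \<alpha>=\<alpha> and \<gamma>=\<gamma> and d=d and \<nu>=\<nu>] assms nu by auto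
      show "0 < Gam" by (rule Gam0)
      show "0 \<le> (\<nu> powr (\<beta>/\<alpha>))^d" by simp
      show "(3 * u)^d * (3 * u)^d * (\<nu> powr (\<beta>/\<alpha>))^d \<le> 9^d * V\<^sup>2"
      proof -
        have eq1: "(3 * u)^d * (3 * u)^d * (\<nu> powr (\<beta>/\<alpha>))^d = ((3 * u) * (3 * u) * \<nu> powr (\<beta>/\<alpha>))^d"
          by (simp only: power_mult_distrib)
        have eq2: "(3 * u) * (3 * u) * \<nu> powr (\<beta>/\<alpha>) = 9 * (u * u * \<nu> powr (\<beta>/\<alpha>))"
          by algebra
        have "u * u * \<nu> powr (\<beta>/\<alpha>) = \<nu> powr (1/(2*\<alpha>) + 1/(2*\<alpha>) + \<beta>/\<alpha>)"
          unfolding u_def by (simp only: powr_add)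
        also have "\<nu> powr (1/(2*\<alpha>) + 1/(2*\<alpha>) + \<beta>/\<alpha>) \<le> \<nu> powr (2 * (1/2 + 1/(4*\<alpha>)))"
        proof (rule powr_mono)
          have "1/(2*\<alpha>) + 1/(2*\<alpha>) + \<beta>/\<alpha> = (1 + \<beta>) / \<alpha>" using assms(1) by (simp add: field_simps)
          also have "\<dots> \<le> (\<alpha> + 1/2) / \<alpha>" using b d1 assms(1) unfolding \<beta>_def by (intro divide_right_mono) auto
          also have "\<dots> = 2 * (1/2 + 1/(4*\<alpha>))" using assms(1) by (simp add: field_simps)
          finally show "1/(2*\<alpha>) + 1/(2*\<alpha>) + \<beta>/\<alpha> \<le> 2 * (1/2 + 1/(4*\<alpha>))" .
          show "1 \<le> \<nu>" using nu by simp
        qed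
        also have "\<nu> powr (2 * (1/2 + 1/(4*\<alpha>))) = (\<nu> powr (1/2 + 1/(4*\<alpha>)))\<^sup>2"
        proof -
          have "\<nu> powr (2 * (1/2 + 1/(4*\<alpha>))) = \<nu> powr ((1/2 + 1/(4*\<alpha>)) + (1/2 + 1/(4*\<alpha>)))"
            by (simp only: mult_2)
          also have "\<dots> = \<nu> powr (1/2 + 1/(4*\<alpha>)) * \<nu> powr (1/2 + 1/(4*\<alpha>))"
            by (rule powr_add)
          also have "\<dots> = (\<nu> powr (1/2 + 1/(4*\<alpha>)))\<^sup>2" by (simp only: power2_eq_square)
          finally show ?thesis .
        qed
        finally have le: "u * u * \<nu> powr (\<beta>/\<alpha>) \<le> (\<nu> powr (1/2 + 1/(4*\<alpha>)))\<^sup>2" .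
        have "(3 * u)^d * (3 * u)^d * (\<nu> powr (\<beta>/\<alpha>))^d = (9 * (u * u * \<nu> powr (\<beta>/\<alpha>)))^d"
          unfolding eq1 eq2 ..
        also have "\<dots> \<le> (9 * (\<nu> powr (1/2 + 1/(4*\<alpha>)))\<^sup>2)^d"
          using le by (intro power_mono mult_left_mono) (auto simp: u_def)
        also have "\<dots> = 9^d * V\<^sup>2" unfolding Vp by (simp add: power_mult_distrib power_mult[symmetric] mult.commute)
        finally show ?thesis .
      qed
      show "0 \<le> mu_bar N c" by (rule mu_bar_nonneg)
      show "0 \<le> korobov_norm \<alpha> \<gamma> d g" by (rule kor_norm_nonneg)
      show "0 \<le> V" by (rule V0)
      show "0 \<le> (9::real)^d" by simp
    qed
    have e1: "err1 d K g N xs c \<le> C1 * korobov_norm \<alpha> \<gamma> d g * (1 / \<nu> powr (1/2 - 1/(4*\<alpha>))) * mu_bar N c"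
      unfolding C1_def K_def by (rule err1_bound[OF assms(1) assms(2) nu gk xs])
    have fin: "err1 d K g N xs c + err2 d K g N xs c L gen \<le> (max C1 C2 + 1) * korobov_norm \<alpha> \<gamma> d g *
        (1 / \<nu> powr (1/2 - 1/(4*\<alpha>)) + V / real L powr (\<beta> - \<tau>) * c_agd \<alpha> \<gamma> d * zeta_dd \<delta> d * Cgd \<gamma> d \<beta> \<tau>) * mu_bar N c"
    proof (rule fin_arith[OF e1 e2 W nh])
      show "0 \<le> korobov_norm \<beta> \<gamma> d ?h" by (rule kor_norm_nonneg)
      show "0 \<le> C1" by (rule C10)
      show "0 \<le> C2" by (rule C20)
      show "0 \<le> korobov_norm \<alpha> \<gamma> d g" by (rule kor_norm_nonneg)
      show "0 \<le> 1 / \<nu> powr (1/2 - 1/(4*\<alpha>))" by simp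
      show "0 \<le> mu_bar N c" by (rule mu_bar_nonneg)
      show "0 \<le> V" by (rule V0)
      show "0 \<le> Cgd \<gamma> d \<beta> \<tau>" by (rule Cgd_nonneg)
      show "0 < real L powr (\<beta> - \<tau>)" using L0 by simp
      show "1 \<le> c_agd \<alpha> \<gamma> d" by (rule c_agd_ge1)
      show "1 \<le> zeta_dd \<delta> d" by (rule zeta_dd_ge1[OF d1(1)])
    qed
    show "err1 d (Rset \<alpha> \<nu> \<gamma> d) g N xs c + err2 d (Rset \<alpha> \<nu> \<gamma> d) g N xs c L gen
       \<le> (max C1 C2 + 1) * korobov_norm \<alpha> \<gamma> d g *
          (1 / \<nu> powr (1/2 - 1 / (4 * \<alpha>))
           + \<nu> powr ((1/2 + 1 / (4 * \<alpha>)) * real d) / real L powr (\<alpha> - 1/2 - \<delta> - \<tau>)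
             * c_agd \<alpha> \<gamma> d * zeta_dd \<delta> d * Cgd \<gamma> d (\<alpha> - 1/2 - \<delta>) \<tau>)
          * mu_bar N c"
      using fin by (simp only: K_def V_def \<beta>_def)
  qed
qed

end
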